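(* Assume (SH). If $x\in\operatorname{dom}f$ satisfies $T(x)=T$ (i.e., $f_t(x)=f(x)$ for all $t\in T$), then \[ \partial f(x)=\bigcap_{\varepsilon>0}\overline{\operatorname{co}}\Big(\bigcup_{t\in T}\partial_\varepsilon f_t(x)\Big). \]
   Context: $X$ is a real separated locally convex space with dual $X^*$ carrying the weak$^*$ topology. $T$ is a nonempty index set, $\{f_t: t\in T\}$ are proper convex lsc functions $X\to\mathbb{R}\cup\{+\infty\}$, $f:=\sup_{t\in T}f_t$. $T(x):=\{t\in T: f_t(x)=f(x)\}$. $\partial_\varepsilon g(x)$ is the $\varepsilon$-subdifferential, $\partial=\partial_0$. $\overline{\operatorname{co}}$ is the weak$^*$-closed convex hull. (SH): $T$ is compact Hausdorff and $t\mapsto f_t(z)$ is upper semicontinuous on $T$ for each $z\in X$. *)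

theory Defs
  imports "HOL-Analysis.Analysis" "HOL-Library.Extended_Real"
begin

definition sep_lcs :: "'a::real_vector topology \<Rightarrow> bool" where
  "sep_lcs tau \<longleftrightarrow>
     topspace tau = UNIV \<and> Hausdorff_space tau \<and>
     continuous_map (prod_topology tau tau) tau (\<lambda>(x, y). x + y) \<and>
     continuous_map (prod_topology euclideanreal tau) tau (\<lambda>(c, x). c *\<^sub>R x) \<and>
     (\<forall>U x. openin tau U \<and> x \<in> U \<longrightarrow> (\<exists>V. openin tau V \<and> convex V \<and> x \<in> V \<and> V \<subseteq> U))"

definition tdual :: "'a::real_vector topology \<Rightarrow> ('a \<Rightarrow> real) set" where
  "tdual tau = {\<phi>. linear \<phi> \<and> continuous_map tau euclideanreal \<phi>}"

definition weak_star :: "'a::real_vector topology \<Rightarrow> ('a \<Rightarrow> real) topology" where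
  "weak_star tau = subtopology (powertop_real UNIV) (tdual tau)"

definition fconvex :: "('a \<Rightarrow> real) set \<Rightarrow> bool" where
  "fconvex S \<longleftrightarrow> (\<forall>\<phi>\<in>S. \<forall>\<psi>\<in>S. \<forall>u::real. 0 \<le> u \<and> u \<le> 1 \<longrightarrow>
      (\<lambda>x. u * \<phi> x + (1 - u) * \<psi> x) \<in> S)"

definition wstar_cch :: "'a::real_vector topology \<Rightarrow> ('a \<Rightarrow> real) set \<Rightarrow> ('a \<Rightarrow> real) set" where
  "wstar_cch tau A = (\<lambda>S. fconvex S \<and> closedin (weak_star tau) S) hull A"

definition proper_fun :: "('a \<Rightarrow> ereal) \<Rightarrow> bool" where
  "proper_fun g \<longleftrightarrow> (\<forall>x. g x \<noteq> -\<infinity>) \<and> (\<exists>x. g x \<noteq> \<infinity>)"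

definition convex_fun :: "('a::real_vector \<Rightarrow> ereal) \<Rightarrow> bool" where
  "convex_fun g \<longleftrightarrow> (\<forall>x y. \<forall>u::real. 0 \<le> u \<and> u \<le> 1 \<longrightarrow>
      g (u *\<^sub>R x + (1 - u) *\<^sub>R y) \<le> ereal u * g x + ereal (1 - u) * g y)"

definition lsc_fun :: "'a topology \<Rightarrow> ('a \<Rightarrow> ereal) \<Rightarrow> bool" where
  "lsc_fun tau g \<longleftrightarrow> (\<forall>c::real. closedin tau {x \<in> topspace tau. g x \<le> ereal c})"

text \<open>epsilon-subdifferential; empty outside the effective domain.\<close>
definition eps_subdiff :: "'a::real_vector topology \<Rightarrow> real \<Rightarrow> ('a \<Rightarrow> ereal) \<Rightarrow> 'a \<Rightarrow> ('a \<Rightarrow> real) set" where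
  "eps_subdiff tau \<epsilon> g x = {\<phi> \<in> tdual tau. g x \<noteq> \<infinity> \<and>
      (\<forall>y. g y \<ge> g x + ereal (\<phi> y - \<phi> x - \<epsilon>))}"

definition usc_on :: "'i topology \<Rightarrow> ('i \<Rightarrow> ereal) \<Rightarrow> bool" where
  "usc_on Ttop h \<longleftrightarrow> (\<forall>c::real. openin Ttop {t \<in> topspace Ttop. h t < ereal c})"

end

theory Submission
  imports Defs "HOL-Library.Function_Algebras"
begin


instantiation "fun" :: (type, real_vector) real_vector
begin
definition scaleR_fun :: "real \<Rightarrow> ('a \<Rightarrow> 'b) \<Rightarrow> 'a \<Rightarrow> 'b" where
  "scaleR_fun r f = (\<lambda>x. r *\<^sub>R f x)"
instance by standard (auto simp: scaleR_fun_def fun_eq_iff scaleR_add_right scaleR_add_left)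
end

lemma scaleR_fun_apply [simp]: "(r *\<^sub>R f) x = r *\<^sub>R f x"
  by (simp add: scaleR_fun_def)

definition hgood :: "('v::real_vector \<Rightarrow> real) \<Rightarrow> 'v \<Rightarrow> ('v \<times> real) set \<Rightarrow> bool" where
  "hgood p x0 G \<longleftrightarrow> (x0, p x0) \<in> G \<and> (\<forall>a\<in>G. \<forall>b\<in>G. a + b \<in> G) \<and>
     (\<forall>a\<in>G. \<forall>c. c *\<^sub>R a \<in> G) \<and> (\<forall>a\<in>G. snd a \<le> p (fst a))"

lemma hahn_banach:
  fixes p :: "'v::real_vector \<Rightarrow> real"
  assumes sub: "\<And>v w. p (v + w) \<le> p v + p w"
    and hom: "\<And>c v. c > 0 \<Longrightarrow> p (c *\<^sub>R v) = c * p v"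
  shows "\<exists>L. linear L \<and> (\<forall>v. L v \<le> p v) \<and> L x0 = p x0"
proof -
  have p0: "p 0 = 0"
    using hom[of 2 0] by simp
  have pneg: "- p v \<le> p (- v)" for v
    using sub[of v "-v"] p0 by simp
  define A where "A = {G. hgood p x0 G}"
  define G0 where "G0 = {(c *\<^sub>R x0, c * p x0) | c. True}"
  have G0A: "G0 \<in> A"
  proof -
    have cp: "c * p x0 \<le> p (c *\<^sub>R x0)" for c
    proof (cases "c > 0")
      case True then show ?thesis using hom by simp
    next
      case False
      show ?thesis
      proof (cases "c = 0")
        case True then show ?thesis using p0 by simp
      next
        case False
        with \<open>\<not> c > 0\<close> have "-c > 0" by simp
        have "p (c *\<^sub>R x0) = p ((-c) *\<^sub>R (- x0))" by simp
        also have "\<dots> = (-c) * p (-x0)" by (rule hom[OF \<open>-c>0\<close>])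
        finally have e: "p (c *\<^sub>R x0) = (-c) * p (-x0)" .
        have "(-c) * (- p x0) \<le> (-c) * p (-x0)"
          using pneg[of x0] \<open>-c>0\<close> by (intro mult_left_mono) auto
        then show ?thesis using e by simp
      qed
    qed
    have "hgood p x0 G0"
      unfolding hgood_def G0_def
    proof (intro conjI ballI allI)
      show "(x0, p x0) \<in> {(c *\<^sub>R x0, c * p x0) |c. True}"
        by (auto intro!: exI[of _ 1])
    next
      fix a b assume "a \<in> {(c *\<^sub>R x0, c * p x0) |c. True}" "b \<in> {(c *\<^sub>R x0, c * p x0) |c. True}"
      then obtain c d where "a = (c *\<^sub>R x0, c * p x0)" "b = (d *\<^sub>R x0, d * p x0)" by blast
      then have "a + b = ((c+d) *\<^sub>R x0, (c+d) * p x0)" by (simp add: algebra_simps)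
      then show "a + b \<in> {(c *\<^sub>R x0, c * p x0) |c. True}" by blast
    next
      fix a e assume "a \<in> {(c *\<^sub>R x0, c * p x0) |c. True}"
      then obtain c where "a = (c *\<^sub>R x0, c * p x0)" by blast
      then have "e *\<^sub>R a = ((e*c) *\<^sub>R x0, (e*c) * p x0)" by simp
      then show "e *\<^sub>R a \<in> {(c *\<^sub>R x0, c * p x0) |c. True}" by blast
    next
      fix a assume "a \<in> {(c *\<^sub>R x0, c * p x0) |c. True}"
      then obtain c where "a = (c *\<^sub>R x0, c * p x0)" by blast
      then show "snd a \<le> p (fst a)" using cp by simp
    qed
    then show ?thesis by (simp add: A_def)
  qed
  have "\<exists>M\<in>A. \<forall>X\<in>A. M \<subseteq> X \<longrightarrow> X = M"
  proof (rule Zorn_Lemma2, intro ballI)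
    fix C assume C: "C \<in> chains A"
    show "\<exists>U\<in>A. \<forall>X\<in>C. X \<subseteq> U"
    proof (cases "C = {}")
      case True then show ?thesis using G0A by auto
    next
      case False
      have CA: "C \<subseteq> A" and ch: "\<And>X Y. X \<in> C \<Longrightarrow> Y \<in> C \<Longrightarrow> X \<subseteq> Y \<or> Y \<subseteq> X"
        using C unfolding chains_def chain_subset_def by auto
      have "hgood p x0 (\<Union>C)"
        unfolding hgood_def
      proof (intro conjI ballI allI)
        show "(x0, p x0) \<in> \<Union>C" using False CA by (auto simp: A_def hgood_def)
      next
        fix a b assume "a \<in> \<Union>C" "b \<in> \<Union>C"
        then obtain X Y where XY: "X \<in> C" "Y \<in> C" "a \<in> X" "b \<in> Y" by auto
        from ch[OF XY(1,2)] show "a + b \<in> \<Union>C"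
        proof
          assume "X \<subseteq> Y"
          have "hgood p x0 Y" using CA XY by (auto simp: A_def)
          then have "a + b \<in> Y" using XY \<open>X \<subseteq> Y\<close> unfolding hgood_def by blast
          then show ?thesis using XY by blast
        next
          assume "Y \<subseteq> X"
          have "hgood p x0 X" using CA XY by (auto simp: A_def)
          then have "a + b \<in> X" using XY \<open>Y \<subseteq> X\<close> unfolding hgood_def by blast
          then show ?thesis using XY by blast
        qed
      next
        fix a c assume "a \<in> \<Union>C"
        then show "c *\<^sub>R a \<in> \<Union>C" using CA by (auto simp: A_def hgood_def)
      next
        fix a assume "a \<in> \<Union>C"
        then show "snd a \<le> p (fst a)" using CA by (auto simp: A_def hgood_def)
      qed
      then show ?thesis by (auto simp: A_def)
    qed
  qed
  then obtain M where MA: "M \<in> A" and Mmax: "\<And>X. X \<in> A \<Longrightarrow> M \<subseteq> X \<Longrightarrow> X = M" by blast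
  have Mg: "hgood p x0 M" using MA by (simp add: A_def)
  have Madd: "a \<in> M \<Longrightarrow> b \<in> M \<Longrightarrow> a + b \<in> M" for a b using Mg by (auto simp: hgood_def)
  have Msc: "a \<in> M \<Longrightarrow> c *\<^sub>R a \<in> M" for a c using Mg by (auto simp: hgood_def)
  have Mle: "(v, r) \<in> M \<Longrightarrow> r \<le> p v" for v r using Mg by (force simp: hgood_def)
  have Mx0: "(x0, p x0) \<in> M" using Mg by (simp add: hgood_def)
  have M00: "(0, 0) \<in> M" using Msc[OF Mx0, of 0] by simp
  have uniq: "(v, r1) \<in> M \<Longrightarrow> (v, r2) \<in> M \<Longrightarrow> r1 = r2" for v r1 r2
  proof -
    assume a: "(v, r1) \<in> M" "(v, r2) \<in> M"
    have "(v, r1) + (-1) *\<^sub>R (v, r2) \<in> M" using Madd[OF a(1) Msc[OF a(2)]] .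
    then have "(0, r1 - r2) \<in> M" by simp
    then have 1: "r1 - r2 \<le> 0" using Mle p0 by fastforce
    have "(v, r2) + (-1) *\<^sub>R (v, r1) \<in> M" using Madd[OF a(2) Msc[OF a(1)]] .
    then have "(0, r2 - r1) \<in> M" by simp
    then have "r2 - r1 \<le> 0" using Mle p0 by fastforce
    with 1 show ?thesis by simp
  qed
  have total: "\<exists>r. (y, r) \<in> M" for y
  proof (rule ccontr)
    assume ny: "\<not> (\<exists>r. (y, r) \<in> M)"
    define S where "S = {a - p (s - y) | s a. (s, a) \<in> M}"
    define c where "c = Sup S"
    have key: "(s1, a1) \<in> M \<Longrightarrow> (s2, a2) \<in> M \<Longrightarrow> a1 - p (s1 - y) \<le> p (s2 + y) - a2" for s1 a1 s2 a2
    proof -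
      assume m: "(s1, a1) \<in> M" "(s2, a2) \<in> M"
      have "(s1 + s2, a1 + a2) \<in> M" using Madd[OF m] by simp
      then have "a1 + a2 \<le> p (s1 + s2)" by (rule Mle)
      also have "p (s1 + s2) = p ((s1 - y) + (s2 + y))" by simp
      also have "\<dots> \<le> p (s1 - y) + p (s2 + y)" by (rule sub)
      finally show ?thesis by simp
    qed
    have Sne: "S \<noteq> {}" using M00 by (auto simp: S_def)
    have Sbdd: "bdd_above S"
      unfolding bdd_above_def S_def using key[OF _ M00] by auto
    have c_up: "(s, a) \<in> M \<Longrightarrow> a - p (s - y) \<le> c" for s a
      unfolding c_def by (rule cSup_upper[OF _ Sbdd]) (auto simp: S_def)
    have c_lo: "(s, a) \<in> M \<Longrightarrow> c \<le> p (s + y) - a" for s a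
      unfolding c_def by (rule cSup_least[OF Sne]) (auto simp: S_def intro: key)
    define M' where "M' = {(s + t *\<^sub>R y, a + t * c) | s a t. (s, a) \<in> M}"
    have "hgood p x0 M'"
      unfolding hgood_def
    proof (intro conjI ballI allI)
      have "(x0, p x0) = (x0 + 0 *\<^sub>R y, p x0 + 0 * c)" by simp
      then show "(x0, p x0) \<in> M'" unfolding M'_def using Mx0 by blast
    next
      fix u w assume "u \<in> M'" "w \<in> M'"
      then obtain s1 a1 t1 s2 a2 t2 where "u = (s1 + t1 *\<^sub>R y, a1 + t1 * c)" "(s1, a1) \<in> M"
        "w = (s2 + t2 *\<^sub>R y, a2 + t2 * c)" "(s2, a2) \<in> M" by (auto simp: M'_def)
      moreover have "(s1 + t1 *\<^sub>R y, a1 + t1 * c) + (s2 + t2 *\<^sub>R y, a2 + t2 * c)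
          = ((s1 + s2) + (t1 + t2) *\<^sub>R y, (a1 + a2) + (t1 + t2) * c)"
        by (simp add: algebra_simps)
      moreover have "(s1 + s2, a1 + a2) \<in> M" using Madd calculation by fastforce
      ultimately show "u + w \<in> M'" unfolding M'_def by blast
    next
      fix u e assume "u \<in> M'"
      then obtain s a t where "u = (s + t *\<^sub>R y, a + t * c)" "(s, a) \<in> M" by (auto simp: M'_def)
      moreover have "e *\<^sub>R (s + t *\<^sub>R y, a + t * c) = (e *\<^sub>R s + (e * t) *\<^sub>R y, e * a + (e * t) * c)"
        by (simp add: algebra_simps)
      moreover have "(e *\<^sub>R s, e * a) \<in> M" using Msc[OF calculation(2), of e] by simp
      ultimately show "e *\<^sub>R u \<in> M'" unfolding M'_def by blast
    next
      fix u assume "u \<in> M'"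
      then obtain s a t where u: "u = (s + t *\<^sub>R y, a + t * c)" and sa: "(s, a) \<in> M" by (auto simp: M'_def)
      have "a + t * c \<le> p (s + t *\<^sub>R y)"
      proof (cases "t > 0")
        case True
        have "((1/t) *\<^sub>R s, (1/t) * a) \<in> M" using Msc[OF sa, of "1/t"] by simp
        from c_lo[OF this] have "t * c \<le> t * (p ((1/t) *\<^sub>R s + y) - (1/t) * a)"
          using True by (simp add: mult_left_mono)
        also have "\<dots> = t * p ((1/t) *\<^sub>R s + y) - a" using True by (simp add: algebra_simps)
        also have "t * p ((1/t) *\<^sub>R s + y) = p (t *\<^sub>R ((1/t) *\<^sub>R s + y))" using hom[OF True] by simp
        also have "t *\<^sub>R ((1/t) *\<^sub>R s + y) = s + t *\<^sub>R y" using True by (simp add: algebra_simps)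
        finally show ?thesis by simp
      next
        case False
        show ?thesis
        proof (cases "t = 0")
          case True then show ?thesis using Mle[OF sa] by simp
        next
          case False
          with \<open>\<not> t > 0\<close> have tp: "-t > 0" by simp
          have "((1/(-t)) *\<^sub>R s, (1/(-t)) * a) \<in> M" using Msc[OF sa, of "1/(-t)"] by simp
          from c_up[OF this] have "(-t) * ((1/(-t)) * a - p ((1/(-t)) *\<^sub>R s - y)) \<le> (-t) * c"
            using tp by (simp add: mult_left_mono)
          then have "a - (-t) * p ((1/(-t)) *\<^sub>R s - y) \<le> (-t) * c"
            using tp by (simp add: algebra_simps)
          also have "(-t) * p ((1/(-t)) *\<^sub>R s - y) = p ((-t) *\<^sub>R ((1/(-t)) *\<^sub>R s - y))"
            using hom[OF tp] by simp
          also have "(-t) *\<^sub>R ((1/(-t)) *\<^sub>R s - y) = s + t *\<^sub>R y" using tp by (simp add: algebra_simps)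
          finally show ?thesis by simp
        qed
      qed
      then show "snd u \<le> p (fst u)" using u by simp
    qed
    moreover have "M \<subseteq> M'"
    proof
      fix u assume "u \<in> M"
      then have m: "(fst u, snd u) \<in> M" by simp
      have "u = (fst u + 0 *\<^sub>R y, snd u + 0 * c)" by simp
      with m show "u \<in> M'" unfolding M'_def by blast
    qed
    moreover have "(y, c) \<in> M'"
    proof -
      have "(y, c) = (0 + 1 *\<^sub>R y, 0 + 1 * c)" by simp
      then show ?thesis unfolding M'_def using M00 by blast
    qed
    ultimately show False using Mmax[of M'] ny by (auto simp: A_def)
  qed
  define L where "L v = (THE r. (v, r) \<in> M)" for v
  have LM: "(v, L v) \<in> M" for v
    unfolding L_def using total[of v] uniq by (metis theI)
  have Leq: "(v, r) \<in> M \<Longrightarrow> L v = r" for v r using LM uniq by blast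
  have "linear L"
  proof (rule linearI)
    fix v w show "L (v + w) = L v + L w"
      using Madd[OF LM[of v] LM[of w]] by (intro Leq) simp
  next
    fix c v show "L (c *\<^sub>R v) = c *\<^sub>R L v"
      using Msc[OF LM[of v], of c] by (simp add: Leq)
  qed
  moreover have "\<forall>v. L v \<le> p v" using LM Mle by blast
  moreover have "L x0 = p x0" using Leq[OF Mx0] .
  ultimately show ?thesis by blast
qed



definition gaugef :: "'v::real_vector set \<Rightarrow> 'v \<Rightarrow> real" where
  "gaugef U v = Inf {r. 0 < r \<and> (1/r) *\<^sub>R v \<in> U}"

lemma alg_separation:
  fixes U :: "'v::real_vector set"
  assumes cU: "convex U" and U0: "0 \<in> U" and abs: "\<And>v. \<exists>e>0. e *\<^sub>R v \<in> U"
    and p0: "p0 \<notin> U"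
  shows "\<exists>L::'v\<Rightarrow>real. linear L \<and> L p0 \<ge> 1 \<and> (\<forall>u\<in>U. L u \<le> 1)"
proof -
  define Lam where "Lam v = {r. 0 < r \<and> (1/r) *\<^sub>R v \<in> U}" for v
  have g: "gaugef U v = Inf (Lam v)" for v by (simp add: gaugef_def Lam_def)
  have up: "r \<in> Lam v \<Longrightarrow> r \<le> r' \<Longrightarrow> r' \<in> Lam v" for r r' v
  proof -
    assume r: "r \<in> Lam v" "r \<le> r'"
    then have rp: "0 < r" and rv: "(1/r) *\<^sub>R v \<in> U" by (auto simp: Lam_def)
    have r'p: "0 < r'" using rp r by simp
    have "(r/r') *\<^sub>R ((1/r) *\<^sub>R v) + (1 - r/r') *\<^sub>R 0 \<in> U"
      by (rule convexD[OF cU rv U0]) (use rp r'p r in \<open>auto simp: field_simps\<close>)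
    moreover have "(r/r') *\<^sub>R ((1/r) *\<^sub>R v) + (1 - r/r') *\<^sub>R 0 = (1/r') *\<^sub>R v"
      using rp by simp
    ultimately have "(1/r') *\<^sub>R v \<in> U" by metis
    then show ?thesis using r'p by (simp add: Lam_def)
  qed
  have ne: "Lam v \<noteq> {}" for v
  proof -
    obtain e where "e > 0" "e *\<^sub>R v \<in> U" using abs by blast
    then have "1/e \<in> Lam v" by (simp add: Lam_def)
    then show ?thesis by blast
  qed
  have bdd: "bdd_below (Lam v)" for v
    by (rule bdd_belowI[of _ 0]) (auto simp: Lam_def)
  have glow: "r \<in> Lam v \<Longrightarrow> gaugef U v \<le> r" for r v
    unfolding g by (rule cInf_lower[OF _ bdd])
  have gnn: "0 \<le> gaugef U v" for v
    unfolding g by (rule cInf_greatest[OF ne]) (auto simp: Lam_def)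
  have glt: "gaugef U v < r \<Longrightarrow> 0 < r \<Longrightarrow> r \<in> Lam v" for v r
  proof -
    assume "gaugef U v < r" "0 < r"
    then obtain r' where "r' \<in> Lam v" "r' < r" using cInf_lessD[OF ne] g by metis
    then show ?thesis using up by auto
  qed
  have scale: "c > 0 \<Longrightarrow> r \<in> Lam v \<Longrightarrow> c * r \<in> Lam (c *\<^sub>R v)" for c r v
    by (auto simp: Lam_def)
  have hom_le: "c > 0 \<Longrightarrow> gaugef U (c *\<^sub>R v) \<le> c * gaugef U v" for c v
  proof -
    assume c: "c > 0"
    have "gaugef U (c *\<^sub>R v) / c \<le> r" if "r \<in> Lam v" for r
      using glow[OF scale[OF c that]] c by (simp add: field_simps)
    then have "gaugef U (c *\<^sub>R v) / c \<le> Inf (Lam v)"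
      by (intro cInf_greatest[OF ne]) auto
    then show ?thesis using c g by (simp add: field_simps)
  qed
  have hom: "c > 0 \<Longrightarrow> gaugef U (c *\<^sub>R v) = c * gaugef U v" for c v
  proof -
    assume c: "c > 0"
    have "gaugef U v = gaugef U ((1/c) *\<^sub>R (c *\<^sub>R v))" using c by simp
    also have "\<dots> \<le> (1/c) * gaugef U (c *\<^sub>R v)" using hom_le[of "1/c" "c *\<^sub>R v"] c by simp
    finally have "c * gaugef U v \<le> gaugef U (c *\<^sub>R v)" using c by (simp add: field_simps)
    with hom_le[OF c, of v] show ?thesis by linarith
  qed
  have addL: "r \<in> Lam v \<Longrightarrow> s \<in> Lam w \<Longrightarrow> r + s \<in> Lam (v + w)" for r s v w
  proof -
    assume r: "r \<in> Lam v" and s: "s \<in> Lam w"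
    then have rp: "0 < r" "(1/r) *\<^sub>R v \<in> U" and sp: "0 < s" "(1/s) *\<^sub>R w \<in> U" by (auto simp: Lam_def)
    have "(r/(r+s)) *\<^sub>R ((1/r) *\<^sub>R v) + (s/(r+s)) *\<^sub>R ((1/s) *\<^sub>R w) \<in> U"
      by (rule convexD[OF cU rp(2) sp(2)]) (use rp sp in \<open>auto simp: add_divide_distrib[symmetric]\<close>)
    moreover have "(r/(r+s)) *\<^sub>R ((1/r) *\<^sub>R v) + (s/(r+s)) *\<^sub>R ((1/s) *\<^sub>R w) = (1/(r+s)) *\<^sub>R (v + w)"
      using rp sp by (simp add: scaleR_add_right)
    ultimately have "(1/(r+s)) *\<^sub>R (v + w) \<in> U" by metis
    then show ?thesis using rp sp by (simp add: Lam_def)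
  qed
  have sub: "gaugef U (v + w) \<le> gaugef U v + gaugef U w" for v w
  proof -
    have "gaugef U (v + w) - s \<le> r" if "r \<in> Lam v" "s \<in> Lam w" for r s
      using glow[OF addL[OF that]] by simp
    then have "gaugef U (v + w) - s \<le> gaugef U v" if "s \<in> Lam w" for s
      unfolding g[of v] using that by (intro cInf_greatest[OF ne]) auto
    then have "gaugef U (v + w) - gaugef U v \<le> s" if "s \<in> Lam w" for s
      using that by fastforce
    then have "gaugef U (v + w) - gaugef U v \<le> gaugef U w"
      unfolding g[of w] by (intro cInf_greatest[OF ne]) auto
    then show ?thesis by simp
  qed
  obtain L where L: "linear L" "\<And>v. L v \<le> gaugef U v" "L p0 = gaugef U p0"
    using hahn_banach[of "gaugef U" p0, OF sub hom] by blast
  have "gaugef U p0 \<ge> 1"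
  proof (rule ccontr)
    assume "\<not> 1 \<le> gaugef U p0"
    then have "1 \<in> Lam p0" using glt[of p0 1] by simp
    then show False using p0 by (simp add: Lam_def)
  qed
  moreover have "L u \<le> 1" if "u \<in> U" for u
  proof -
    have "1 \<in> Lam u" using that by (simp add: Lam_def)
    then show ?thesis using glow L(2)[of u] by force
  qed
  ultimately have "linear L \<and> 1 \<le> L p0 \<and> (\<forall>u\<in>U. L u \<le> 1)" using L(1,3) by simp
  then show ?thesis by blast
qed



lemma lcs_top: "sep_lcs tau \<Longrightarrow> topspace tau = UNIV"
  by (simp add: sep_lcs_def)

lemma lcs_scal_fixed:
  assumes X: "sep_lcs tau"
  shows "continuous_map euclideanreal tau (\<lambda>c. c *\<^sub>R v)"
proof -
  have m: "continuous_map (prod_topology euclideanreal tau) tau (\<lambda>(c, x). c *\<^sub>R x)"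
    using X by (simp add: sep_lcs_def)
  have p: "continuous_map euclideanreal (prod_topology euclideanreal tau) (\<lambda>c. (c, v))"
    using lcs_top[OF X] by (simp add: continuous_map_paired)
  show ?thesis using continuous_map_compose[OF p m] by (simp add: o_def)
qed

lemma lcs_affine_cont:
  assumes X: "sep_lcs tau"
  shows "continuous_map tau tau (\<lambda>v. c *\<^sub>R v + a)"
proof -
  have m: "continuous_map (prod_topology euclideanreal tau) tau (\<lambda>(c, x). c *\<^sub>R x)"
    and ad: "continuous_map (prod_topology tau tau) tau (\<lambda>(x, y). x + y)"
    using X by (auto simp: sep_lcs_def)
  have p: "continuous_map tau (prod_topology euclideanreal tau) (\<lambda>v. (c, v))"
    using lcs_top[OF X] by (simp add: continuous_map_paired)
  have s: "continuous_map tau tau (\<lambda>v. c *\<^sub>R v)"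
    using continuous_map_compose[OF p m] by (simp add: o_def)
  have p2: "continuous_map tau (prod_topology tau tau) (\<lambda>v. (c *\<^sub>R v, a))"
    using lcs_top[OF X] s by (simp add: continuous_map_paired)
  show ?thesis using continuous_map_compose[OF p2 ad] by (simp add: o_def)
qed

lemma lcs_open_affine:
  assumes X: "sep_lcs tau" and W: "openin tau W"
  shows "openin tau {v. c *\<^sub>R v + a \<in> W}"
  using openin_continuous_map_preimage[OF lcs_affine_cont[OF X] W] lcs_top[OF X] by simp

lemma lcs_absorb:
  assumes X: "sep_lcs tau" and W: "openin tau W" and W0: "0 \<in> W"
  shows "\<exists>e>0. \<forall>c. \<bar>c\<bar> < e \<longrightarrow> c *\<^sub>R v \<in> W"
proof -
  have "openin euclideanreal {c \<in> topspace euclideanreal. c *\<^sub>R v \<in> W}"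
    by (rule openin_continuous_map_preimage[OF lcs_scal_fixed[OF X] W])
  then have "open {c. c *\<^sub>R v \<in> W}" by simp
  moreover have "0 \<in> {c. c *\<^sub>R v \<in> W}" using W0 by simp
  ultimately obtain e where "e > 0" "\<forall>c. dist c 0 < e \<longrightarrow> c \<in> {c. c *\<^sub>R v \<in> W}"
    unfolding open_dist by blast
  then show ?thesis by (auto simp: dist_real_def)
qed

lemma lcs_sym_nbhd:
  assumes X: "sep_lcs tau" and W: "openin tau W" and W0: "0 \<in> W"
  shows "\<exists>V. openin tau V \<and> convex V \<and> 0 \<in> V \<and> V \<subseteq> W \<and> (\<forall>v\<in>V. -v \<in> V)"
proof -
  obtain V0 where V0: "openin tau V0" "convex V0" "0 \<in> V0" "V0 \<subseteq> W"
    using X W W0 unfolding sep_lcs_def by blast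
  define V where "V = V0 \<inter> {v. (-1) *\<^sub>R v + 0 \<in> V0}"
  have "openin tau V" unfolding V_def by (intro openin_Int V0 lcs_open_affine[OF X])
  moreover have "convex V"
  proof -
    have "convex {v. (-1) *\<^sub>R v + 0 \<in> V0}"
      unfolding convex_def
    proof (intro ballI allI impI)
      fix a b :: 'a and u w :: real
      assume ab: "a \<in> {v. (-1) *\<^sub>R v + 0 \<in> V0}" "b \<in> {v. (-1) *\<^sub>R v + 0 \<in> V0}"
        and uw: "0 \<le> u" "0 \<le> w" "u + w = 1"
      have "u *\<^sub>R (-a) + w *\<^sub>R (-b) \<in> V0"
        using convexD[OF V0(2), of "-a" "-b" u w] ab uw by simp
      then show "u *\<^sub>R a + w *\<^sub>R b \<in> {v. (-1) *\<^sub>R v + 0 \<in> V0}"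
        by (simp add: scaleR_add_right)
    qed
    then show ?thesis unfolding V_def using V0(2) by (rule convex_Int[rotated])
  qed
  moreover have "0 \<in> V" using V0(3) by (simp add: V_def)
  moreover have "V \<subseteq> W" using V0(4) by (auto simp: V_def)
  moreover have "\<forall>v\<in>V. -v \<in> V" by (simp add: V_def)
  ultimately have "openin tau V \<and> convex V \<and> 0 \<in> V \<and> V \<subseteq> W \<and> (\<forall>v\<in>V. -v \<in> V)"
    by (intro conjI)
  then show ?thesis by (rule exI)
qed

lemma lcs_linear_cont:
  assumes X: "sep_lcs tau" and L: "linear L" and V: "openin tau V" "0 \<in> V"
    and b: "\<And>v. v \<in> V \<Longrightarrow> \<bar>L v\<bar> \<le> 1"
  shows "continuous_map tau euclideanreal L"
  unfolding continuous_map_def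
proof (intro conjI allI impI)
  show "L \<in> topspace tau \<rightarrow> topspace euclideanreal" by simp
next
  fix Ob assume "openin euclideanreal Ob"
  then have oO: "open Ob" by simp
  show "openin tau {x \<in> topspace tau. L x \<in> Ob}"
  proof (rule openin_subopen[THEN iffD2], intro ballI)
    fix y assume "y \<in> {x \<in> topspace tau. L x \<in> Ob}"
    then have "L y \<in> Ob" by simp
    then obtain e where e: "e > 0" "\<And>w. dist w (L y) < e \<Longrightarrow> w \<in> Ob"
      using oO unfolding open_dist by blast
    define N where "N = {w. (2/e) *\<^sub>R w + (- (2/e) *\<^sub>R y) \<in> V}"
    have "openin tau N" unfolding N_def by (rule lcs_open_affine[OF X V(1)])
    moreover have "y \<in> N" using V(2) by (simp add: N_def)
    moreover have "N \<subseteq> {x \<in> topspace tau. L x \<in> Ob}"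
    proof
      fix w assume "w \<in> N"
      then have "(2/e) *\<^sub>R (w - y) \<in> V" by (simp add: N_def scaleR_diff_right)
      then have "\<bar>L ((2/e) *\<^sub>R (w - y))\<bar> \<le> 1" by (rule b)
      then have a: "\<bar>(2/e) * (L w - L y)\<bar> \<le> 1"
        using linear_scale[OF L] linear_diff[OF L] by simp
      moreover have "\<bar>L w - L y\<bar> = (e/2) * \<bar>(2/e) * (L w - L y)\<bar>"
      proof -
        have "\<bar>d\<bar> = (e/2) * \<bar>(2/e) * d\<bar>" for d :: real using e(1) by (simp add: abs_mult)
        then show ?thesis .
      qed
      moreover have "(e/2) * \<bar>(2/e) * (L w - L y)\<bar> \<le> (e/2) * 1"
        by (rule mult_left_mono) (use a e(1) in auto)
      ultimately have "\<bar>L w - L y\<bar> \<le> e/2" by simp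
      then have "dist (L w) (L y) < e" using e(1) by (simp add: dist_real_def)
      then show "w \<in> {x \<in> topspace tau. L x \<in> Ob}" using e(2) lcs_top[OF X] by simp
    qed
    ultimately show "\<exists>T. openin tau T \<and> y \<in> T \<and> T \<subseteq> {x \<in> topspace tau. L x \<in> Ob}" by blast
  qed
qed

lemma lsc_open:
  assumes X: "sep_lcs tau" and h: "lsc_fun tau h"
  shows "openin tau {y. ereal c < h y}"
proof -
  have "closedin tau {y \<in> topspace tau. h y \<le> ereal c}" using h by (simp add: lsc_fun_def)
  then have "openin tau (topspace tau - {y \<in> topspace tau. h y \<le> ereal c})" by (rule openin_diff[OF openin_topspace])
  moreover have "topspace tau - {y \<in> topspace tau. h y \<le> ereal c} = {y. ereal c < h y}"
    using lcs_top[OF X] by auto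
  ultimately show ?thesis by simp
qed

lemma tdual_comb:
  assumes "\<psi>1 \<in> tdual tau" "\<psi>2 \<in> tdual tau"
  shows "(\<lambda>y. a * \<psi>1 y + b * \<psi>2 y) \<in> tdual tau"
proof -
  have "linear (\<lambda>y. a * \<psi>1 y + b * \<psi>2 y)"
    using assms unfolding tdual_def
    by (intro linearI) (auto simp: linear_add linear_scale algebra_simps)
  moreover have "continuous_map tau euclideanreal (\<lambda>y. a * \<psi>1 y + b * \<psi>2 y)"
    using assms unfolding tdual_def
    by (intro continuous_map_add continuous_map_real_mult_left) auto
  ultimately show ?thesis by (simp add: tdual_def)
qed



lemma geo_sep:
  fixes A B :: "('a::real_vector \<times> real) set"
  assumes X: "sep_lcs tau" and cA: "convex A" and cB: "convex B" and disj: "A \<inter> B = {}"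
    and b0: "b0 \<in> B" and V: "openin tau V" "0 \<in> V" "\<And>v. v \<in> V \<Longrightarrow> -v \<in> V" and dl: "\<delta> > 0"
    and box: "\<And>v \<rho>. v \<in> V \<Longrightarrow> \<bar>\<rho>\<bar> < \<delta> \<Longrightarrow> (a1 + v, ar + \<rho>) \<in> A"
  shows "\<exists>\<psi>\<in>tdual tau. \<exists>c. (\<forall>a\<in>A. \<forall>b\<in>B. \<psi> (fst b) + c * snd b \<le> \<psi> (fst a) + c * snd a)
            \<and> \<psi> (fst b0) + c * snd b0 + 1 \<le> \<psi> a1 + c * ar"
proof -
  define d0 where "d0 = b0 - (a1, ar)"
  define U where "U = (\<lambda>x. x - d0) ` (\<Union>b\<in>B. \<Union>a\<in>A. {b - a})"
  have Umem: "u \<in> U \<longleftrightarrow> (\<exists>a\<in>A. \<exists>b\<in>B. u = b - a - d0)" for u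
    unfolding U_def by (auto simp del: prod.collapse simp add: image_iff) 
  have cU: "convex U" unfolding U_def
    by (rule convex_translation_subtract[OF convex_differences[OF cB cA]])
  have a0A: "(a1, ar) \<in> A" using box[of 0 0] V(2) dl by simp
  have U0: "0 \<in> U"
  proof -
    have "0 = b0 - (a1, ar) - d0" by (simp add: d0_def)
    then show ?thesis unfolding Umem using a0A b0 by blast
  qed
  have boxU: "(v, \<rho>) \<in> U" if "v \<in> V" "\<bar>\<rho>\<bar> < \<delta>" for v \<rho>
  proof -
    have "(a1 + (-v), ar + (-\<rho>)) \<in> A" using box[OF V(3)[OF that(1)], of "-\<rho>"] that(2) by simp
    moreover have "(v, \<rho>) = b0 - (a1 + (-v), ar + (-\<rho>)) - d0" by (simp add: d0_def)
    ultimately show ?thesis unfolding Umem using b0 by blast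
  qed
  have abs: "\<exists>e>0. e *\<^sub>R w \<in> U" for w
  proof -
    obtain v \<rho> where w: "w = (v, \<rho>)" by (cases w)
    obtain e1 where e1: "e1 > 0" "\<And>c. \<bar>c\<bar> < e1 \<Longrightarrow> c *\<^sub>R v \<in> V"
      using lcs_absorb[OF X V(1,2)] by blast
    define e where "e = min (e1/2) (\<delta> / (2 * (\<bar>\<rho>\<bar> + 1)))"
    have ep: "e > 0" using e1 dl by (simp add: e_def)
    have "e *\<^sub>R v \<in> V" using e1 ep by (intro e1(2)) (simp add: e_def)
    moreover have "\<bar>e * \<rho>\<bar> < \<delta>"
    proof -
      have "\<bar>e * \<rho>\<bar> = e * \<bar>\<rho>\<bar>" using ep by (simp add: abs_mult)
      also have "\<dots> \<le> (\<delta> / (2 * (\<bar>\<rho>\<bar> + 1))) * \<bar>\<rho>\<bar>" by (intro mult_right_mono) (auto simp: e_def)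
      also have "\<dots> < \<delta>"
      proof -
        have "\<bar>\<rho>\<bar> < 2 * (\<bar>\<rho>\<bar> + 1)" by simp
        then have "\<bar>\<rho>\<bar> / (2 * (\<bar>\<rho>\<bar> + 1)) < 1" by (simp add: divide_less_eq)
        then have "\<delta> * (\<bar>\<rho>\<bar> / (2 * (\<bar>\<rho>\<bar> + 1))) < \<delta> * 1" using dl by (intro mult_strict_left_mono) auto
        then show ?thesis by simp
      qed
      finally show ?thesis .
    qed
    ultimately have "(e *\<^sub>R v, e * \<rho>) \<in> U" by (rule boxU)
    then show ?thesis using ep w by auto
  qed
  have p0: "- d0 \<notin> U"
  proof
    assume "- d0 \<in> U"
    then obtain a b where "a \<in> A" "b \<in> B" "- d0 = b - a - d0" unfolding Umem by blast
    then have "a = b" by (simp add: algebra_simps)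
    then show False using \<open>a \<in> A\<close> \<open>b \<in> B\<close> disj by blast
  qed
  obtain L :: "'a \<times> real \<Rightarrow> real" where L: "linear L" "L (- d0) \<ge> 1" "\<And>u. u \<in> U \<Longrightarrow> L u \<le> 1"
    using alg_separation[OF cU U0 abs p0] by blast
  define \<psi> where "\<psi> y = L (y, 0)" for y
  define c where "c = L (0, 1)"
  have Lform: "L (y, r) = \<psi> y + c * r" for y r
  proof -
    have "(y, r) = (y, 0) + r *\<^sub>R (0, 1)" by simp
    then have "L (y, r) = L ((y, 0) + r *\<^sub>R (0, 1))" by metis
    also have "\<dots> = L (y, 0) + r * L (0, 1)" by (simp only: linear_add[OF L(1)] linear_scale[OF L(1)] real_scaleR_def)
    finally show ?thesis by (simp add: \<psi>_def c_def)
  qed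
  have Lsplit: "L u = \<psi> (fst u) + c * snd u" for u using Lform[of "fst u" "snd u"] by simp
  have lin: "linear \<psi>"
  proof (rule linearI)
    fix y z show "\<psi> (y + z) = \<psi> y + \<psi> z"
      unfolding \<psi>_def using linear_add[OF L(1), of "(y,0)" "(z,0)"] by simp
  next
    fix r y show "\<psi> (r *\<^sub>R y) = r *\<^sub>R \<psi> y"
      unfolding \<psi>_def using linear_scale[OF L(1), of r "(y,0)"] by simp
  qed
  have bnd: "\<bar>\<psi> v\<bar> \<le> 1" if "v \<in> V" for v
  proof -
    have "L (v, 0) \<le> 1" using L(3)[OF boxU[OF that]] dl by simp
    moreover have "L (-v, 0) \<le> 1" using L(3)[OF boxU[OF V(3)[OF that]]] dl by simp
    moreover have "L (-v, 0) = - L (v, 0)"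
      using linear_neg[OF L(1), of "(v,0)"] by simp
    ultimately show ?thesis unfolding \<psi>_def by linarith
  qed
  have "\<psi> \<in> tdual tau" unfolding tdual_def
    using lin lcs_linear_cont[OF X lin V(1,2) bnd] by simp
  moreover have "\<psi> (fst b) + c * snd b \<le> \<psi> (fst a) + c * snd a" if "a \<in> A" "b \<in> B" for a b
  proof -
    have "L (b - a - d0) \<le> 1" using L(3) that unfolding Umem by blast
    moreover have "L (b - a - d0) = L b - L a + L (- d0)"
      using linear_diff[OF L(1)] linear_neg[OF L(1)] by simp
    ultimately have "L b \<le> L a" using L(2) by simp
    then show ?thesis unfolding Lsplit .
  qed
  moreover have "\<psi> (fst b0) + c * snd b0 + 1 \<le> \<psi> a1 + c * ar"
  proof -
    have "L (- d0) = L (a1, ar) - L b0" unfolding d0_def using linear_diff[OF L(1)] linear_neg[OF L(1)] by simp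
    then show ?thesis using L(2) Lsplit[of b0] Lform[of a1 ar] by simp
  qed
  ultimately show ?thesis by blast
qed



lemma convf_comb:
  assumes "convex_fun h" "h a = ereal ra" "h b = ereal rb" "0 \<le> u" "u \<le> 1"
  shows "h (u *\<^sub>R b + (1 - u) *\<^sub>R a) \<le> ereal (u * rb + (1 - u) * ra)"
  using assms unfolding convex_fun_def by (metis plus_ereal.simps(1) times_ereal.simps(1))

lemma eps0:
  fixes h :: "'a::real_vector \<Rightarrow> ereal"
  assumes X: "sep_lcs tau" and prp: "\<And>y. h y \<noteq> -\<infinity>" and cvx: "convex_fun h"
    and lsc: "lsc_fun tau h" and hx: "h x = ereal hxr" and eta: "\<eta> > 0"
  shows "\<exists>\<psi>. \<psi> \<in> eps_subdiff tau \<eta> h x"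
proof -
  define W where "W = {w. 1 *\<^sub>R w + x \<in> {y. ereal (hxr - \<eta>/2) < h y}}"
  have oW: "openin tau W" unfolding W_def by (intro lcs_open_affine[OF X] lsc_open[OF X lsc])
  have W0: "0 \<in> W" using eta hx by (simp add: W_def)
  obtain V where V: "openin tau V" "convex V" "0 \<in> V" "V \<subseteq> W" "\<And>v. v \<in> V \<Longrightarrow> -v \<in> V"
    using lcs_sym_nbhd[OF X oW W0] by blast
  define A where "A = {(x + v, r) | v r. v \<in> V \<and> r < hxr - \<eta>/2}"
  define B where "B = {p. h (fst p) \<le> ereal (snd p)}"
  have cA: "convex A" unfolding convex_def
  proof (intro ballI allI impI)
    fix p q :: "'a \<times> real" and u w :: real
    assume "p \<in> A" "q \<in> A" and uw: "0 \<le> u" "0 \<le> w" "u + w = 1"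
    then obtain v1 r1 v2 r2 where p: "p = (x + v1, r1)" "v1 \<in> V" "r1 < hxr - \<eta>/2"
      and q: "q = (x + v2, r2)" "v2 \<in> V" "r2 < hxr - \<eta>/2" by (auto simp: A_def)
    have "u *\<^sub>R v1 + w *\<^sub>R v2 \<in> V" using convexD[OF V(2) p(2) q(2) uw] .
    moreover have "u * r1 + w * r2 < hxr - \<eta>/2"
    proof (cases "u = 0")
      case True then show ?thesis using uw q by simp
    next
      case False
      then have "u * r1 < u * (hxr - \<eta>/2)" using uw p by (intro mult_strict_left_mono) auto
      moreover have "w * r2 \<le> w * (hxr - \<eta>/2)" using uw q by (intro mult_left_mono) auto
      ultimately have "u * r1 + w * r2 < u * (hxr - \<eta>/2) + w * (hxr - \<eta>/2)" by linarith
      then have "u * r1 + w * r2 < (u + w) * (hxr - \<eta>/2)" by (simp only: distrib_right)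
      then show ?thesis using uw by simp
    qed
    moreover have "u *\<^sub>R p + w *\<^sub>R q = (x + (u *\<^sub>R v1 + w *\<^sub>R v2), u * r1 + w * r2)"
      using p q uw by (simp add: algebra_simps scaleR_add_right flip: scaleR_add_left)
    ultimately show "u *\<^sub>R p + w *\<^sub>R q \<in> A" unfolding A_def by blast
  qed
  have cB: "convex B" unfolding convex_def
  proof (intro ballI allI impI)
    fix p q :: "'a \<times> real" and u w :: real
    assume "p \<in> B" "q \<in> B" and uw: "0 \<le> u" "0 \<le> w" "u + w = 1"
    then have hp: "h (fst p) \<le> ereal (snd p)" and hq: "h (fst q) \<le> ereal (snd q)" by (auto simp: B_def)
    obtain r1 where r1: "h (fst p) = ereal r1" using hp prp by (cases "h (fst p)") auto
    obtain r2 where r2: "h (fst q) = ereal r2" using hq prp by (cases "h (fst q)") auto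
    have "h (u *\<^sub>R fst p + (1 - u) *\<^sub>R fst q) \<le> ereal (u * r1 + (1 - u) * r2)"
      by (rule convf_comb[OF cvx r2 r1]) (use uw in auto)
    also have "\<dots> \<le> ereal (u * snd p + w * snd q)"
    proof -
      have w1: "1 - u = w" using uw by simp
      show ?thesis using hp hq r1 r2 uw unfolding w1 by (auto intro!: add_mono mult_left_mono)
    qed
    finally have "h (u *\<^sub>R fst p + (1 - u) *\<^sub>R fst q) \<le> ereal (u * snd p + w * snd q)" .
    moreover have "1 - u = w" using uw by simp
    ultimately show "u *\<^sub>R p + w *\<^sub>R q \<in> B" by (simp add: B_def)
  qed
  have disj: "A \<inter> B = {}"
  proof (rule ccontr)
    assume "A \<inter> B \<noteq> {}"
    then obtain v r where "v \<in> V" "r < hxr - \<eta>/2" "h (x + v) \<le> ereal r" by (auto simp: A_def B_def)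
    moreover have "ereal (hxr - \<eta>/2) < h (x + v)" using \<open>v \<in> V\<close> V(4) by (auto simp: W_def add.commute)
    ultimately have "ereal (hxr - \<eta>/2) < ereal r" by (meson less_le_trans)
    then show False using \<open>r < hxr - \<eta>/2\<close> by simp
  qed
  have b0: "(x, hxr) \<in> B" using hx by (simp add: B_def)
  have box: "(x + v, (hxr - \<eta>/2 - 1) + \<rho>) \<in> A" if "v \<in> V" "\<bar>\<rho>\<bar> < 1" for v \<rho>
    using that unfolding A_def by auto
  obtain \<psi> c where psi: "\<psi> \<in> tdual tau"
    and sep: "\<And>a b. a \<in> A \<Longrightarrow> b \<in> B \<Longrightarrow> \<psi> (fst b) + c * snd b \<le> \<psi> (fst a) + c * snd a"
    and nt: "\<psi> x + c * hxr + 1 \<le> \<psi> x + c * (hxr - \<eta>/2 - 1)"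
    using geo_sep[OF X cA cB disj b0 V(1,3,5) zero_less_one box] by auto
  have cneg: "c < 0"
  proof -
    have "c * (\<eta>/2 + 1) \<le> -1" using nt by (simp add: algebra_simps)
    show ?thesis
    proof (rule ccontr)
      assume "\<not> c < 0"
      then have "0 \<le> c * (\<eta>/2 + 1)" using eta by (intro mult_nonneg_nonneg) auto
      then show False using \<open>c * (\<eta>/2 + 1) \<le> -1\<close> by linarith
    qed
  qed
  define k where "k = - c"
  have kp: "k > 0" using cneg by (simp add: k_def)
  define \<psi>' where "\<psi>' = (\<lambda>y. (1/k) * \<psi> y + 0 * \<psi> y)"
  have psi': "\<psi>' \<in> tdual tau" unfolding \<psi>'_def by (rule tdual_comb[OF psi psi])
  have ineq: "ereal hxr + ereal (\<psi>' y - \<psi>' x - \<eta>) \<le> h y" for y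
  proof (cases "h y = \<infinity>")
    case True then show ?thesis by simp
  next
    case False
    then obtain ry where ry: "h y = ereal ry" using prp by (cases "h y") auto
    have "(y, ry) \<in> B" using ry by (simp add: B_def)
    moreover have "(x + 0, hxr - \<eta>) \<in> A" using V(3) eta unfolding A_def by auto
    ultimately have "\<psi> y + c * ry \<le> \<psi> x + c * (hxr - \<eta>)" using sep by fastforce
    then have "\<psi> y - k * ry \<le> \<psi> x - k * (hxr - \<eta>)" by (simp add: k_def)
    then have "(\<psi> y - \<psi> x) / k \<le> ry - hxr + \<eta>" using kp by (simp add: field_simps)
    then have "\<psi>' y - \<psi>' x \<le> ry - hxr + \<eta>" by (simp add: \<psi>'_def diff_divide_distrib)
    then show ?thesis using ry by simp
  qed
  have "\<psi>' \<in> eps_subdiff tau \<eta> h x"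
    unfolding eps_subdiff_def using psi' hx ineq by simp
  then show ?thesis by blast
qed



lemma slope_conv:
  assumes cvx: "convex_fun h" and hx: "h x = ereal hxr" and a: "0 < a" "a \<le> s"
    and R: "h (x + s *\<^sub>R d) = ereal R"
  shows "h (x + a *\<^sub>R d) \<le> ereal ((a/s) * R + (1 - a/s) * hxr)"
proof -
  have sp: "s > 0" using a by simp
  have "h ((a/s) *\<^sub>R (x + s *\<^sub>R d) + (1 - a/s) *\<^sub>R x) \<le> ereal ((a/s) * R + (1 - a/s) * hxr)"
    by (rule convf_comb[OF cvx hx R]) (use a sp in auto)
  moreover have "(a/s) *\<^sub>R (x + s *\<^sub>R d) + (1 - a/s) *\<^sub>R x = x + a *\<^sub>R d"
  proof -
    have "(a/s) *\<^sub>R (x + s *\<^sub>R d) + (1 - a/s) *\<^sub>R x = ((a/s) + (1 - a/s)) *\<^sub>R x + ((a/s) * s) *\<^sub>R d"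
      by (simp only: scaleR_add_right scaleR_add_left scaleR_scaleR add_ac)
    also have "\<dots> = x + a *\<^sub>R d" using sp by simp
    finally show ?thesis .
  qed
  ultimately show ?thesis by simp
qed

lemma grid_arith:
  fixes s a s0 \<epsilon> \<theta> \<Delta> R hxr \<gamma> :: real
  assumes "0 < s0" "s0 \<le> a" "a \<le> s" "\<epsilon> > 0" "\<theta> > 0"
    and c: "(s - a \<le> \<Delta> \<and> \<epsilon> * \<Delta> \<le> s0 * s0 * \<theta> / 2) \<or> 2 * \<epsilon> / \<theta> \<le> a"
    and h: "hxr + a * (\<gamma> - \<theta>/2) - \<epsilon> < (a/s) * R + (1 - a/s) * hxr"
  shows "hxr + s * (\<gamma> - \<theta>) - \<epsilon> \<le> R"
proof -
  have ap: "a > 0" "s > 0" using assms by auto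
  have K: "\<epsilon> * (s - a) \<le> a * s * \<theta> / 2"
    using c
  proof
    assume c1: "s - a \<le> \<Delta> \<and> \<epsilon> * \<Delta> \<le> s0 * s0 * \<theta> / 2"
    have "\<epsilon> * (s - a) \<le> \<epsilon> * \<Delta>" using c1 assms by (intro mult_left_mono) auto
    also have "\<dots> \<le> s0 * s0 * \<theta> / 2" using c1 by simp
    also have "s0 * s0 \<le> a * s" using assms by (intro mult_mono) auto
    then have "s0 * s0 * \<theta> / 2 \<le> a * s * \<theta> / 2" using assms by (simp add: divide_right_mono)
    finally show ?thesis .
  next
    assume c2: "2 * \<epsilon> / \<theta> \<le> a"
    then have e2: "\<epsilon> \<le> a * \<theta> / 2" using assms by (simp add: field_simps)
    have "\<epsilon> * (s - a) \<le> \<epsilon> * s" using assms by (intro mult_left_mono) auto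
    also have "\<dots> \<le> (a * \<theta> / 2) * s" using e2 ap by (intro mult_right_mono) auto
    finally show ?thesis by (simp add: algebra_simps)
  qed
  have e1: "(a/s) * R + (1 - a/s) * hxr = hxr + (a/s) * (R - hxr)" by (simp add: algebra_simps diff_divide_distrib)
  have "a * (\<gamma> - \<theta>/2) - \<epsilon> < (a/s) * (R - hxr)" using h e1 by simp
  then have "s * (a * (\<gamma> - \<theta>/2) - \<epsilon>) < s * ((a/s) * (R - hxr))" using ap by (intro mult_strict_left_mono) auto
  also have "s * ((a/s) * (R - hxr)) = a * (R - hxr)" using ap by simp
  finally have H: "s * (a * (\<gamma> - \<theta>/2) - \<epsilon>) < a * (R - hxr)" .
  have "a * (s * (\<gamma> - \<theta>) - \<epsilon>) \<le> s * (a * (\<gamma> - \<theta>/2) - \<epsilon>)"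
    using K by (simp add: algebra_simps)
  then have "a * (s * (\<gamma> - \<theta>) - \<epsilon>) \<le> a * (R - hxr)" using H by linarith
  then have "s * (\<gamma> - \<theta>) - \<epsilon> \<le> R - hxr" using ap by simp
  then show ?thesis by simp
qed



lemma unif_bound:
  fixes h :: "'a::real_vector \<Rightarrow> ereal"
  assumes X: "sep_lcs tau" and prp: "\<And>y. h y \<noteq> -\<infinity>" and cvx: "convex_fun h"
    and lsc: "lsc_fun tau h" and hx: "h x = ereal hxr" and ep: "\<epsilon> > 0"
    and ray: "\<And>s. s > 0 \<Longrightarrow> ereal (hxr + s * \<gamma> - \<epsilon>) \<le> h (x + s *\<^sub>R z)"
    and bg: "\<beta>' < \<gamma>"
  shows "\<exists>V. openin tau V \<and> convex V \<and> 0 \<in> V \<and> (\<forall>v\<in>V. -v \<in> V) \<and>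
           (\<forall>v\<in>V. \<forall>s>0. ereal (hxr + s * \<beta>' - \<epsilon>) \<le> h (x + s *\<^sub>R (z + v)))"
proof -
  define \<theta> where "\<theta> = \<gamma> - \<beta>'"
  have thp: "\<theta> > 0" using bg by (simp add: \<theta>_def)
  obtain \<psi>0 where "\<psi>0 \<in> eps_subdiff tau (\<epsilon>/2) h x"
    using eps0[OF X prp cvx lsc hx, of "\<epsilon>/2"] ep by auto
  then have psit: "\<psi>0 \<in> tdual tau" and low: "\<And>y. h x + ereal (\<psi>0 y - \<psi>0 x - \<epsilon>/2) \<le> h y"
    by (auto simp: eps_subdiff_def)
  have lin0: "linear \<psi>0" and cont0: "continuous_map tau euclideanreal \<psi>0" using psit by (auto simp: tdual_def)
  define M where "M = \<bar>\<psi>0 z - 1 - \<beta>'\<bar> + 1"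
  have Mp: "M > 0" by (simp add: M_def add_nonneg_pos)
  define s0 where "s0 = \<epsilon> / (2 * M)"
  have s0p: "s0 > 0" using ep Mp by (simp add: s0_def)
  define \<Delta> where "\<Delta> = s0 * s0 * \<theta> / (2 * \<epsilon>)"
  have Dp: "\<Delta> > 0" using s0p thp ep by (simp add: \<Delta>_def)
  have eD: "\<epsilon> * \<Delta> = s0 * s0 * \<theta> / 2" using ep by (simp add: \<Delta>_def)
  obtain N :: nat where N: "(2 * \<epsilon> / \<theta>) / \<Delta> < real N" using reals_Archimedean2 by blast
  define sg where "sg i = s0 + real i * \<Delta>" for i :: nat
  have sgp: "sg i \<ge> s0" for i using Dp by (simp add: sg_def)
  have sgN: "2 * \<epsilon> / \<theta> \<le> sg N"
  proof -
    have "(2 * \<epsilon> / \<theta>) / \<Delta> < real N \<longleftrightarrow> 2 * \<epsilon> / \<theta> < real N * \<Delta>"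
      by (rule pos_divide_less_eq[OF Dp])
    then have "2 * \<epsilon> / \<theta> < real N * \<Delta>" using N by blast
    then show ?thesis using s0p by (simp add: sg_def)
  qed
  define Wi where "Wi i = {v. sg i *\<^sub>R v + (x + sg i *\<^sub>R z) \<in> {y. ereal (hxr + sg i * (\<gamma> - \<theta>/2) - \<epsilon>) < h y}}" for i
  define Wp where "Wp = {v \<in> topspace tau. \<psi>0 v \<in> {-1<..<1}}"
  define W where "W = Wp \<inter> (\<Inter>i\<in>{..N}. Wi i)"
  have oW: "openin tau W"
    unfolding W_def
  proof (rule openin_Int)
    show "openin tau Wp" unfolding Wp_def
      by (rule openin_continuous_map_preimage[OF cont0]) simp
    show "openin tau (\<Inter>i\<in>{..N}. Wi i)"
    proof (rule openin_INT2)
      fix i show "openin tau (Wi i)" unfolding Wi_def by (rule lcs_open_affine[OF X lsc_open[OF X lsc]])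
    qed auto
  qed
  have W0: "0 \<in> W"
  proof -
    have "0 \<in> Wp" using linear_0[OF lin0] lcs_top[OF X] by (simp add: Wp_def)
    moreover have "0 \<in> Wi i" for i
    proof -
      have sp: "sg i > 0" using sgp[of i] s0p by linarith
      have "ereal (hxr + sg i * (\<gamma> - \<theta>/2) - \<epsilon>) < ereal (hxr + sg i * \<gamma> - \<epsilon>)"
        using sp thp by (simp add: algebra_simps)
      also have "\<dots> \<le> h (x + sg i *\<^sub>R z)" by (rule ray[OF sp])
      finally show ?thesis by (simp add: Wi_def)
    qed
    ultimately show ?thesis by (simp add: W_def)
  qed
  obtain V where V: "openin tau V" "convex V" "0 \<in> V" "V \<subseteq> W" "\<And>v. v \<in> V \<Longrightarrow> -v \<in> V"
    using lcs_sym_nbhd[OF X oW W0] by blast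
  have bound: "ereal (hxr + s * \<beta>' - \<epsilon>) \<le> h (x + s *\<^sub>R (z + v))" if vV: "v \<in> V" and sp: "s > 0" for v s
  proof -
    have vW: "v \<in> W" using vV V(4) by blast
    show ?thesis
    proof (cases "s < s0")
      case True
      have pv: "\<bar>\<psi>0 v\<bar> < 1" using vW by (simp add: W_def Wp_def abs_less_iff)
      have "h x + ereal (\<psi>0 (x + s *\<^sub>R (z + v)) - \<psi>0 x - \<epsilon>/2) \<le> h (x + s *\<^sub>R (z + v))" by (rule low)
      moreover have "\<psi>0 (x + s *\<^sub>R (z + v)) - \<psi>0 x = s * (\<psi>0 z + \<psi>0 v)"
        using linear_add[OF lin0] linear_scale[OF lin0] by (simp add: algebra_simps)
      moreover have "hxr + s * \<beta>' - \<epsilon> \<le> hxr + s * (\<psi>0 z + \<psi>0 v) - \<epsilon>/2"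
      proof -
        have q: "\<beta>' - (\<psi>0 z + \<psi>0 v) \<le> M" using pv unfolding M_def by linarith
        have "s * (\<beta>' - (\<psi>0 z + \<psi>0 v)) \<le> s * M" using q sp by (intro mult_left_mono) auto
        also have "\<dots> \<le> s0 * M" using True Mp by (intro mult_right_mono) auto
        also have "s0 * M = \<epsilon> / 2" using Mp by (simp add: s0_def)
        finally show ?thesis by (simp add: algebra_simps)
      qed
      ultimately show ?thesis using hx
        by (metis (no_types, opaque_lifting) add_diff_eq ereal_less_eq(3) order_trans plus_ereal.simps(1))
    next
      case False
      then have ss0: "s0 \<le> s" by simp
      show ?thesis
      proof (cases "h (x + s *\<^sub>R (z + v)) = \<infinity>")
        case True then show ?thesis by simp
      next
        case False
        then obtain R where R: "h (x + s *\<^sub>R (z + v)) = ereal R" using prp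
          by (cases "h (x + s *\<^sub>R (z + v))") auto
        define I where "I = {i. i \<le> N \<and> sg i \<le> s}"
        have fI: "finite I" by (simp add: I_def)
        have I0: "0 \<in> I" using ss0 by (simp add: I_def sg_def)
        define i where "i = Max I"
        have iI: "i \<in> I" unfolding i_def using fI I0 by (intro Max_in) auto
        then have iN: "i \<le> N" and sgi: "sg i \<le> s" by (auto simp: I_def)
        have cnd: "(s - sg i \<le> \<Delta> \<and> \<epsilon> * \<Delta> \<le> s0 * s0 * \<theta> / 2) \<or> 2 * \<epsilon> / \<theta> \<le> sg i"
        proof (cases "i = N")
          case True then show ?thesis using sgN by simp
        next
          case False
          then have "Suc i \<le> N" using iN by simp
          moreover have "Suc i \<notin> I"
          proof
            assume "Suc i \<in> I"
            then have "Suc i \<le> i" unfolding i_def using fI by (simp add: Max_ge)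
            then show False by simp
          qed
          ultimately have "s < sg (Suc i)" by (auto simp: I_def)
          then have "s - sg i \<le> \<Delta>" by (simp add: sg_def algebra_simps)
          then show ?thesis using eD by simp
        qed
        have sip: "0 < sg i" using sgp[of i] s0p by linarith
        have "h (x + sg i *\<^sub>R (z + v)) \<le> ereal ((sg i / s) * R + (1 - sg i / s) * hxr)"
          by (rule slope_conv[OF cvx hx sip sgi R])
        moreover have "ereal (hxr + sg i * (\<gamma> - \<theta>/2) - \<epsilon>) < h (x + sg i *\<^sub>R (z + v))"
        proof -
          have "v \<in> Wi i" using vW iN by (simp add: W_def)
          moreover have "sg i *\<^sub>R v + (x + sg i *\<^sub>R z) = x + sg i *\<^sub>R (z + v)"
            by (simp add: scaleR_add_right algebra_simps)
          ultimately show ?thesis by (simp add: Wi_def)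
        qed
        ultimately have "ereal (hxr + sg i * (\<gamma> - \<theta>/2) - \<epsilon>) < ereal ((sg i / s) * R + (1 - sg i / s) * hxr)"
          by (metis less_le_trans)
        then have "hxr + sg i * (\<gamma> - \<theta>/2) - \<epsilon> < (sg i / s) * R + (1 - sg i / s) * hxr"
          by simp
        then have "hxr + s * (\<gamma> - \<theta>) - \<epsilon> \<le> R"
          by (intro grid_arith[OF s0p sgp sgi ep thp cnd])
        then show ?thesis using R by (simp add: \<theta>_def)
      qed
    qed
  qed
  show ?thesis using V bound by blast
qed



lemma lam_arg:
  fixes Q K :: real
  assumes "\<And>l. l \<ge> 0 \<Longrightarrow> l * Q \<le> K"
  shows "Q \<le> 0"
proof (rule ccontr)
  assume "\<not> Q \<le> 0"
  then have Qp: "Q > 0" by simp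
  have "((\<bar>K\<bar> + 1) / Q) * Q \<le> K" using assms[of "(\<bar>K\<bar> + 1) / Q"] Qp by simp
  then have "\<bar>K\<bar> + 1 \<le> K" using Qp by simp
  then show False by simp
qed

lemma eps_dir:
  fixes h :: "'a::real_vector \<Rightarrow> ereal"
  assumes X: "sep_lcs tau" and prp: "\<And>y. h y \<noteq> -\<infinity>" and cvx: "convex_fun h"
    and lsc: "lsc_fun tau h" and hx: "h x = ereal hxr" and ep: "\<epsilon> > 0"
    and ray: "\<And>s. s > 0 \<Longrightarrow> ereal (hxr + s * \<gamma> - \<epsilon>) \<le> h (x + s *\<^sub>R z)"
    and bg: "\<beta> < \<gamma>"
  shows "\<exists>\<psi>\<in>eps_subdiff tau \<epsilon> h x. \<beta> < \<psi> z"
proof -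
  define \<beta>' where "\<beta>' = (\<beta> + \<gamma>) / 2"
  have b'g: "\<beta>' < \<gamma>" and bb': "\<beta> < \<beta>'" using bg by (auto simp: \<beta>'_def)
  obtain V where V: "openin tau V" "convex V" "0 \<in> V" "\<And>v. v \<in> V \<Longrightarrow> -v \<in> V"
    and bound: "\<And>v s. v \<in> V \<Longrightarrow> s > 0 \<Longrightarrow> ereal (hxr + s * \<beta>' - \<epsilon>) \<le> h (x + s *\<^sub>R (z + v))"
    using unif_bound[OF X prp cvx lsc hx ep ray b'g] by blast
  define A where "A = {(z + v, r) | v r. v \<in> V \<and> r < \<beta>'}"
  define C where "C = {(y - x, \<rho> - hxr + \<epsilon>) | y \<rho>. h y \<le> ereal \<rho>}"
  define B where "B = convex_cone hull C"
  have cA: "convex A" unfolding convex_def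
  proof (intro ballI allI impI)
    fix p q :: "'a \<times> real" and u w :: real
    assume "p \<in> A" "q \<in> A" and uw: "0 \<le> u" "0 \<le> w" "u + w = 1"
    then obtain v1 r1 v2 r2 where p: "p = (z + v1, r1)" "v1 \<in> V" "r1 < \<beta>'"
      and q: "q = (z + v2, r2)" "v2 \<in> V" "r2 < \<beta>'" by (auto simp: A_def)
    have "u *\<^sub>R v1 + w *\<^sub>R v2 \<in> V" using convexD[OF V(2) p(2) q(2) uw] .
    moreover have "u * r1 + w * r2 < \<beta>'"
    proof (cases "u = 0")
      case True then show ?thesis using uw q by simp
    next
      case False
      then have "u * r1 < u * \<beta>'" using uw p by (intro mult_strict_left_mono) auto
      moreover have "w * r2 \<le> w * \<beta>'" using uw q by (intro mult_left_mono) auto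
      ultimately have "u * r1 + w * r2 < u * \<beta>' + w * \<beta>'" by linarith
      then have "u * r1 + w * r2 < (u + w) * \<beta>'" by (simp only: distrib_right)
      then show ?thesis using uw by simp
    qed
    moreover have "u *\<^sub>R p + w *\<^sub>R q = (z + (u *\<^sub>R v1 + w *\<^sub>R v2), u * r1 + w * r2)"
      using p q uw by (simp add: algebra_simps scaleR_add_right flip: scaleR_add_left)
    ultimately show "u *\<^sub>R p + w *\<^sub>R q \<in> A" unfolding A_def by blast
  qed
  have cC: "convex C" unfolding convex_def
  proof (intro ballI allI impI)
    fix p q :: "'a \<times> real" and u w :: real
    assume "p \<in> C" "q \<in> C" and uw: "0 \<le> u" "0 \<le> w" "u + w = 1"
    then obtain y1 \<rho>1 y2 \<rho>2 where p: "p = (y1 - x, \<rho>1 - hxr + \<epsilon>)" "h y1 \<le> ereal \<rho>1"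
      and q: "q = (y2 - x, \<rho>2 - hxr + \<epsilon>)" "h y2 \<le> ereal \<rho>2" by (auto simp: C_def)
    obtain r1 where r1: "h y1 = ereal r1" using p(2) prp by (cases "h y1") auto
    obtain r2 where r2: "h y2 = ereal r2" using q(2) prp by (cases "h y2") auto
    have w1: "1 - u = w" using uw by simp
    have "h (u *\<^sub>R y1 + (1 - u) *\<^sub>R y2) \<le> ereal (u * r1 + (1 - u) * r2)"
      by (rule convf_comb[OF cvx r2 r1]) (use uw in auto)
    also have "\<dots> \<le> ereal (u * \<rho>1 + w * \<rho>2)"
      using p q r1 r2 uw unfolding w1 by (auto intro!: add_mono mult_left_mono)
    finally have hh: "h (u *\<^sub>R y1 + w *\<^sub>R y2) \<le> ereal (u * \<rho>1 + w * \<rho>2)" unfolding w1 .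
    have "u *\<^sub>R p + w *\<^sub>R q = ((u *\<^sub>R y1 + w *\<^sub>R y2) - x, (u * \<rho>1 + w * \<rho>2) - hxr + \<epsilon>)"
    proof -
      have "u *\<^sub>R p + w *\<^sub>R q = ((u *\<^sub>R y1 + w *\<^sub>R y2) - (u + w) *\<^sub>R x, (u * \<rho>1 + w * \<rho>2) - (u + w) * hxr + (u + w) * \<epsilon>)"
        using p q by (simp add: algebra_simps scaleR_diff_right)
      then show ?thesis using uw by simp
    qed
    then show "u *\<^sub>R p + w *\<^sub>R q \<in> C" unfolding C_def using hh by blast
  qed
  have hxle: "h x \<le> ereal hxr" using hx by simp
  have xC: "(x - x, hxr - hxr + \<epsilon>) \<in> C" unfolding C_def using hxle by blast
  then have Cne: "C \<noteq> {}" by blast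
  have Bmem: "b \<in> B \<longleftrightarrow> (\<exists>c\<in>C. \<exists>l\<ge>0. b = l *\<^sub>R c)" for b
  proof -
    have "convex hull C = C" using cC by (rule convex_hull_eq[THEN iffD2])
    then show ?thesis unfolding B_def convex_cone_hull_convex_hull_nonempty[OF Cne] by auto
  qed
  have cB: "convex B" unfolding B_def using convex_cone_convex_cone_hull[of C]
    by (simp add: convex_cone_def)
  have disj: "A \<inter> B = {}"
  proof (rule ccontr)
    assume "A \<inter> B \<noteq> {}"
    then obtain p where pA: "p \<in> A" and pB: "p \<in> B" by blast
    from pA obtain v r where pe: "p = (z + v, r)" and v: "v \<in> V" "r < \<beta>'" unfolding A_def by blast
    from pB obtain cc l where cc: "cc \<in> C" and l: "l \<ge> 0" and pl: "p = l *\<^sub>R cc" unfolding Bmem by blast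
    from cc obtain y \<rho> where cce: "cc = (y - x, \<rho> - hxr + \<epsilon>)" and hy: "h y \<le> ereal \<rho>" unfolding C_def by blast
    have eq: "(z + v, r) = l *\<^sub>R (y - x, \<rho> - hxr + \<epsilon>)" using pe pl cce by simp
    show False
    proof (cases "l = 0")
      case True
      then have zv: "z + v = 0" and r0: "r = 0" using eq by auto
      have "\<beta>' \<le> 0"
      proof (rule ccontr)
        assume "\<not> \<beta>' \<le> 0"
        then have bp: "\<beta>' > 0" by simp
        have "ereal (hxr + (2 * \<epsilon> / \<beta>') * \<beta>' - \<epsilon>) \<le> h (x + (2 * \<epsilon> / \<beta>') *\<^sub>R (z + v))"
          using bound[OF v(1), of "2 * \<epsilon> / \<beta>'"] bp ep by simp
        then have "hxr + \<epsilon> \<le> hxr" using zv hx bp by simp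
        then show False using ep by simp
      qed
      then show False using v(2) r0 by simp
    next
      case False
      then have lp: "l > 0" using l by simp
      define s where "s = 1 / l"
      have sp: "s > 0" using lp by (simp add: s_def)
      have e1: "z + v = l *\<^sub>R (y - x)" and e2: "r = l * (\<rho> - hxr + \<epsilon>)" using eq by auto
      have "s *\<^sub>R (z + v) = y - x" using lp unfolding e1 s_def by simp
      then have yeq: "y = x + s *\<^sub>R (z + v)" by (simp add: algebra_simps)
      have "s * r = \<rho> - hxr + \<epsilon>" using lp unfolding e2 s_def by simp
      then have req: "\<rho> = hxr - \<epsilon> + s * r" by simp
      have "ereal (hxr + s * \<beta>' - \<epsilon>) \<le> h y" using bound[OF v(1) sp] yeq by simp
      also have "\<dots> \<le> ereal \<rho>" by (rule hy)
      finally have "hxr + s * \<beta>' - \<epsilon> \<le> hxr - \<epsilon> + s * r" using req by simp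
      moreover have "s * r < s * \<beta>'" using sp v(2) by simp
      ultimately show False by simp
    qed
  qed
  have b0: "(0, \<epsilon>) \<in> B"
  proof -
    have "(0::'a, \<epsilon>) \<in> C" using xC by simp
    then show ?thesis unfolding Bmem by (intro bexI[of _ "(0, \<epsilon>)"] exI[of _ 1]) auto
  qed
  have box: "(z + v, (\<beta>' - 1) + \<rho>) \<in> A" if "v \<in> V" "\<bar>\<rho>\<bar> < 1" for v \<rho>
    using that unfolding A_def by auto
  obtain \<psi> c where psi: "\<psi> \<in> tdual tau"
    and sep: "\<And>a b. a \<in> A \<Longrightarrow> b \<in> B \<Longrightarrow> \<psi> (fst b) + c * snd b \<le> \<psi> (fst a) + c * snd a"
    and nt: "\<psi> 0 + c * \<epsilon> + 1 \<le> \<psi> z + c * (\<beta>' - 1)"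
    using geo_sep[OF X cA cB disj b0 V(1,3,4) zero_less_one box] by auto
  have lin: "linear \<psi>" using psi by (simp add: tdual_def)
  define \<beta>'' where "\<beta>'' = (\<beta> + \<beta>') / 2"
  have b''1: "\<beta> < \<beta>''" "\<beta>'' < \<beta>'" using bb' by (auto simp: \<beta>''_def)
  have aS: "(z, \<beta>'') \<in> A" using V(3) b''1 unfolding A_def by force
  have Bel: "l *\<^sub>R (y - x, ry - hxr + \<epsilon>) \<in> B" if "l \<ge> 0" "h y = ereal ry" for l y ry
    unfolding Bmem C_def using that by force
  have key: "l * (\<psi> y - \<psi> x + c * (ry - hxr + \<epsilon>)) \<le> \<psi> z + c * \<beta>''" if "l \<ge> 0" "h y = ereal ry" for l y ry
  proof -
    have "\<psi> (fst (l *\<^sub>R (y - x, ry - hxr + \<epsilon>))) + c * snd (l *\<^sub>R (y - x, ry - hxr + \<epsilon>)) \<le> \<psi> z + c * \<beta>''"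
      using sep[OF aS Bel[OF that]] by simp
    then show ?thesis using linear_scale[OF lin] linear_diff[OF lin] by (simp add: algebra_simps)
  qed
  have cle: "c \<le> 0"
  proof -
    have "c * \<epsilon> \<le> 0"
      by (rule lam_arg[of _ "\<psi> z + c * \<beta>''"]) (use key[OF _ hx] in \<open>simp add: mult.assoc\<close>)
    then show ?thesis using ep by (simp add: mult_le_0_iff)
  qed
  show ?thesis
  proof (cases "c = 0")
    case False
    with cle have cn: "c < 0" by simp
    define k where "k = - c"
    have kp: "k > 0" using cn by (simp add: k_def)
    define \<psi>' where "\<psi>' = (\<lambda>y. (1/k) * \<psi> y + 0 * \<psi> y)"
    have psi': "\<psi>' \<in> tdual tau" unfolding \<psi>'_def by (rule tdual_comb[OF psi psi])
    have ineq: "ereal hxr + ereal (\<psi>' y - \<psi>' x - \<epsilon>) \<le> h y" for y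
    proof (cases "h y = \<infinity>")
      case True then show ?thesis by simp
    next
      case False
      then obtain ry where ry: "h y = ereal ry" using prp by (cases "h y") auto
      have "\<psi> y - \<psi> x + c * (ry - hxr + \<epsilon>) \<le> 0"
        by (rule lam_arg[of _ "\<psi> z + c * \<beta>''"]) (use key[OF _ ry] in simp)
      then have "(\<psi> y - \<psi> x) \<le> k * (ry - hxr + \<epsilon>)" by (simp add: k_def)
      then have "(\<psi> y - \<psi> x) / k \<le> ry - hxr + \<epsilon>" using kp by (simp add: field_simps)
      then have "\<psi>' y - \<psi>' x \<le> ry - hxr + \<epsilon>" by (simp add: \<psi>'_def diff_divide_distrib)
      then show ?thesis using ry by simp
    qed
    have "\<psi>' \<in> eps_subdiff tau \<epsilon> h x" unfolding eps_subdiff_def using psi' hx ineq by simp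
    moreover have "\<beta> < \<psi>' z"
    proof -
      have "0 \<le> \<psi> z + c * \<beta>''" using key[OF _ hx, of 0] by simp
      then have "k * \<beta>'' \<le> \<psi> z" by (simp add: k_def)
      then have "\<beta>'' \<le> \<psi> z / k" using kp by (simp add: field_simps)
      then show ?thesis using b''1 by (simp add: \<psi>'_def)
    qed
    ultimately show ?thesis by blast
  next
    case True
    have psiz: "1 \<le> \<psi> z" using nt True linear_0[OF lin] by simp
    have dneg: "\<psi> y - \<psi> x \<le> 0" if "h y = ereal ry" for y ry
      by (rule lam_arg[of _ "\<psi> z + c * \<beta>''"]) (use key[OF _ that] True in simp)
    obtain \<psi>1 where "\<psi>1 \<in> eps_subdiff tau \<epsilon> h x" using eps0[OF X prp cvx lsc hx ep] by blast
    then have psi1: "\<psi>1 \<in> tdual tau" and low1: "\<And>y. h x + ereal (\<psi>1 y - \<psi>1 x - \<epsilon>) \<le> h y"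
      by (auto simp: eps_subdiff_def)
    define \<mu> where "\<mu> = \<bar>\<beta> - \<psi>1 z\<bar> + 1"
    have mup: "\<mu> > 0" by (simp add: \<mu>_def add_nonneg_pos)
    define \<psi>2 where "\<psi>2 = (\<lambda>y. 1 * \<psi>1 y + \<mu> * \<psi> y)"
    have psi2: "\<psi>2 \<in> tdual tau" unfolding \<psi>2_def by (rule tdual_comb[OF psi1 psi])
    have ineq: "ereal hxr + ereal (\<psi>2 y - \<psi>2 x - \<epsilon>) \<le> h y" for y
    proof (cases "h y = \<infinity>")
      case True then show ?thesis by simp
    next
      case False
      then obtain ry where ry: "h y = ereal ry" using prp by (cases "h y") auto
      have "\<mu> * (\<psi> y - \<psi> x) \<le> 0" using dneg[OF ry] mup by (simp add: mult_le_0_iff)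
      then have "\<psi>2 y - \<psi>2 x - \<epsilon> \<le> \<psi>1 y - \<psi>1 x - \<epsilon>" by (simp add: \<psi>2_def algebra_simps)
      then have "ereal hxr + ereal (\<psi>2 y - \<psi>2 x - \<epsilon>) \<le> ereal hxr + ereal (\<psi>1 y - \<psi>1 x - \<epsilon>)" by simp
      also have "\<dots> \<le> h y" using low1[of y] hx by simp
      finally show ?thesis .
    qed
    have "\<psi>2 \<in> eps_subdiff tau \<epsilon> h x" unfolding eps_subdiff_def using psi2 hx ineq by simp
    moreover have "\<beta> < \<psi>2 z"
    proof -
      have "\<mu> * 1 \<le> \<mu> * \<psi> z" using psiz mup by (intro mult_left_mono) auto
      then have "\<psi>1 z + \<mu> \<le> \<psi>2 z" by (simp add: \<psi>2_def)
      moreover have "\<beta> < \<psi>1 z + \<mu>" unfolding \<mu>_def by linarith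
      ultimately show ?thesis by simp
    qed
    ultimately show ?thesis by blast
  qed
qed



lemma sum_fun_apply:
  fixes f :: "'b \<Rightarrow> 'a \<Rightarrow> real"
  assumes "finite Y"
  shows "(\<Sum>y\<in>Y. f y) i = (\<Sum>y\<in>Y. f y i)"
  using assms by (induction Y rule: finite_induct) auto

lemma wstar_sep:
  fixes S :: "('a::real_vector \<Rightarrow> real) set"
  assumes fc: "fconvex S" and cl: "closedin (weak_star tau) S"
    and phi: "\<phi> \<in> tdual tau" "\<phi> \<notin> S"
  shows "\<exists>z \<beta>. \<beta> < \<phi> z \<and> (\<forall>\<psi>\<in>S. \<psi> z \<le> \<beta>)"
proof -
  have Ssub: "S \<subseteq> tdual tau"
    using closedin_subset[OF cl] by (simp add: weak_star_def)
  have linphi: "linear \<phi>" using phi(1) by (simp add: tdual_def)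
  show ?thesis
  proof (cases "S = {}")
    case True
    then show ?thesis using linear_0[OF linphi] by (intro exI[of _ 0] exI[of _ "-1"]) simp
  next
    case False
    then obtain k0 where k0: "k0 \<in> S" by blast
    obtain Cc where Cc: "closedin (powertop_real UNIV) Cc" and SC: "S = Cc \<inter> tdual tau"
      using cl unfolding weak_star_def closedin_subtopology by blast
    have oO: "openin (powertop_real UNIV) (topspace (powertop_real UNIV) - Cc)"
      using Cc by (rule openin_diff[OF openin_topspace])
    have phiO: "\<phi> \<in> topspace (powertop_real UNIV) - Cc" using phi SC by auto
    obtain U where Uf: "finite {i \<in> UNIV. U i \<noteq> topspace euclideanreal}"
      and Uo: "\<forall>i\<in>UNIV. openin euclideanreal (U i)" and phU: "\<phi> \<in> Pi\<^sub>E UNIV U"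
      and Usub: "Pi\<^sub>E UNIV U \<subseteq> topspace (powertop_real UNIV) - Cc"
      using oO phiO unfolding openin_product_topology_alt by blast
    define Y where "Y = {i. U i \<noteq> UNIV}"
    have fY: "finite Y" using Uf by (simp add: Y_def)
    have "\<forall>y\<in>Y. \<exists>d>0. \<forall>t. \<bar>t - \<phi> y\<bar> < d \<longrightarrow> t \<in> U y"
    proof
      fix y
      have "open (U y)" using Uo by simp
      moreover have "\<phi> y \<in> U y" using phU by auto
      ultimately obtain d where "d > 0" "\<forall>t. dist t (\<phi> y) < d \<longrightarrow> t \<in> U y"
        unfolding open_dist by blast
      then show "\<exists>d>0. \<forall>t. \<bar>t - \<phi> y\<bar> < d \<longrightarrow> t \<in> U y" by (auto simp: dist_real_def)
    qed
    then obtain dd where dd: "\<And>y. y \<in> Y \<Longrightarrow> dd y > 0"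
      "\<And>y t. y \<in> Y \<Longrightarrow> \<bar>t - \<phi> y\<bar> < dd y \<Longrightarrow> t \<in> U y"
      by metis
    define \<delta> where "\<delta> = Min (insert 1 (dd ` Y))"
    have dp: "\<delta> > 0" unfolding \<delta>_def using fY dd(1) by (subst Min_gr_iff) auto
    have dle: "\<delta> \<le> dd y" if "y \<in> Y" for y unfolding \<delta>_def using fY that by (intro Min_le) auto
    have notS: "\<psi> \<notin> S" if "\<psi> \<in> tdual tau" "\<And>y. y \<in> Y \<Longrightarrow> \<bar>\<psi> y - \<phi> y\<bar> < \<delta>" for \<psi>
    proof -
      have "\<psi> \<in> Pi\<^sub>E UNIV U"
      proof -
        have "\<psi> y \<in> U y" for y
        proof (cases "y \<in> Y")
          case True then show ?thesis using dd(2)[OF True] that(2)[OF True] dle[OF True] by fastforce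
        next
          case False then show ?thesis by (simp add: Y_def)
        qed
        then show ?thesis by auto
      qed
      then have "\<psi> \<notin> Cc" using Usub by auto
      then show ?thesis using SC by auto
    qed
    define E where "E \<psi> = (\<lambda>i. if i \<in> Y then \<psi> i else 0 :: real)" for \<psi> :: "'a \<Rightarrow> real"
    define U' where "U' = {w :: 'a \<Rightarrow> real. \<exists>k\<in>S. \<forall>y\<in>Y. \<bar>w y + k0 y - k y\<bar> < \<delta>}"
    have cU: "convex U'" unfolding convex_def
    proof (intro ballI allI impI)
      fix w1 w2 :: "'a \<Rightarrow> real" and u v :: real
      assume "w1 \<in> U'" "w2 \<in> U'" and uv: "0 \<le> u" "0 \<le> v" "u + v = 1"
      then obtain k1 k2 where k1: "k1 \<in> S" "\<And>y. y\<in>Y \<Longrightarrow> \<bar>w1 y + k0 y - k1 y\<bar> < \<delta>"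
        and k2: "k2 \<in> S" "\<And>y. y\<in>Y \<Longrightarrow> \<bar>w2 y + k0 y - k2 y\<bar> < \<delta>" unfolding U'_def by blast
      define k where "k = (\<lambda>x. u * k1 x + (1 - u) * k2 x)"
      have kS: "k \<in> S" using fc k1(1) k2(1) uv unfolding fconvex_def k_def by auto
      have "\<bar>(u *\<^sub>R w1 + v *\<^sub>R w2) y + k0 y - k y\<bar> < \<delta>" if "y \<in> Y" for y
      proof -
        have "(u *\<^sub>R w1 + v *\<^sub>R w2) y + k0 y - k y = u * (w1 y + k0 y - k1 y) + v * (w2 y + k0 y - k2 y)"
        proof -
          have vv: "v = 1 - u" using uv by simp
          show ?thesis unfolding vv by (simp add: k_def algebra_simps)
        qed
        also have "\<bar>\<dots>\<bar> \<le> u * \<bar>w1 y + k0 y - k1 y\<bar> + v * \<bar>w2 y + k0 y - k2 y\<bar>"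
          using uv by (simp add: abs_triangle_ineq[THEN order_trans] abs_mult)
        also have "\<dots> < \<delta>" using k1(2)[OF that] k2(2)[OF that] uv by (rule convex_bound_lt)
        finally show ?thesis .
      qed
      then show "u *\<^sub>R w1 + v *\<^sub>R w2 \<in> U'" unfolding U'_def using kS by blast
    qed
    have U0: "0 \<in> U'" unfolding U'_def using k0 dp by (intro CollectI bexI[of _ k0]) auto
    have abs: "\<exists>e>0. e *\<^sub>R w \<in> U'" for w
    proof -
      define M where "M = 1 + (\<Sum>y\<in>Y. \<bar>w y\<bar>)"
      have Mp: "M > 0" by (simp add: M_def add_pos_nonneg sum_nonneg)
      define e where "e = \<delta> / (2 * M)"
      have ep: "e > 0" using dp Mp by (simp add: e_def)
      have "\<bar>(e *\<^sub>R w) y + k0 y - k0 y\<bar> < \<delta>" if "y \<in> Y" for y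
      proof -
        have wy: "\<bar>w y\<bar> \<le> M" unfolding M_def using fY that
          by (smt (verit) sum_nonneg_leq_bound abs_ge_zero member_le_sum)
        have "\<bar>(e *\<^sub>R w) y + k0 y - k0 y\<bar> = e * \<bar>w y\<bar>" using ep by (simp add: abs_mult)
        also have "\<dots> \<le> e * M" using wy ep by (intro mult_left_mono) auto
        also have "e * M = \<delta> / 2" using Mp by (simp add: e_def)
        finally show ?thesis using dp by simp
      qed
      then have "e *\<^sub>R w \<in> U'" unfolding U'_def using k0 by blast
      then show ?thesis using ep by blast
    qed
    define p0 where "p0 = E \<phi> - E k0"
    have p0: "p0 \<notin> U'"
    proof
      assume "p0 \<in> U'"
      then obtain k where k: "k \<in> S" "\<And>y. y \<in> Y \<Longrightarrow> \<bar>p0 y + k0 y - k y\<bar> < \<delta>" unfolding U'_def by blast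
      have "\<bar>k y - \<phi> y\<bar> < \<delta>" if "y \<in> Y" for y
        using k(2)[OF that] that by (simp add: p0_def E_def abs_minus_commute)
      then have "k \<notin> S" using notS Ssub k(1) by blast
      then show False using k(1) by simp
    qed
    obtain L :: "('a \<Rightarrow> real) \<Rightarrow> real" where L: "linear L" "L p0 \<ge> 1" "\<And>u. u \<in> U' \<Longrightarrow> L u \<le> 1"
      using alg_separation[OF cU U0 abs p0] by blast
    define M' where "M' = 1 + (\<Sum>y\<in>Y. \<bar>\<phi> y - k0 y\<bar>)"
    have M'p: "M' > 0" by (simp add: M'_def add_pos_nonneg sum_nonneg)
    define s where "s = \<delta> / (2 * M')"
    have sp: "s > 0" using dp M'p by (simp add: s_def)
    have small: "\<bar>s * (\<phi> y - k0 y)\<bar> < \<delta>" if "y \<in> Y" for y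
    proof -
      have wy: "\<bar>\<phi> y - k0 y\<bar> \<le> M'" unfolding M'_def using fY that
        by (smt (verit) sum_nonneg_leq_bound abs_ge_zero member_le_sum)
      have "\<bar>s * (\<phi> y - k0 y)\<bar> = s * \<bar>\<phi> y - k0 y\<bar>" using sp by (simp add: abs_mult)
      also have "\<dots> \<le> s * M'" using wy sp by (intro mult_left_mono) auto
      also have "s * M' = \<delta> / 2" using M'p by (simp add: s_def)
      finally show ?thesis using dp by simp
    qed
    define \<beta> where "\<beta> = 1 + L (E k0) - s * L p0"
    have LEk: "L (E k) \<le> \<beta>" if "k \<in> S" for k
    proof -
      have "E k - E k0 + s *\<^sub>R p0 \<in> U'"
      proof -
        have "\<bar>(E k - E k0 + s *\<^sub>R p0) y + k0 y - k y\<bar> < \<delta>" if "y \<in> Y" for y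
          using small[OF that] that by (simp add: E_def p0_def algebra_simps)
        then show ?thesis unfolding U'_def using \<open>k \<in> S\<close> by blast
      qed
      then have "L (E k - E k0 + s *\<^sub>R p0) \<le> 1" by (rule L(3))
      moreover have "L (E k - E k0 + s *\<^sub>R p0) = L (E k) - L (E k0) + s * L p0"
        using linear_add[OF L(1)] linear_diff[OF L(1)] linear_scale[OF L(1)] by simp
      ultimately show ?thesis by (simp add: \<beta>_def)
    qed
    have LEphi: "\<beta> < L (E \<phi>)"
    proof -
      have "L (E \<phi>) = L p0 + L (E k0)" unfolding p0_def using linear_diff[OF L(1)] by simp
      moreover have "s * 1 \<le> s * L p0" using L(2) sp by (intro mult_left_mono) auto
      ultimately show ?thesis using L(2) sp unfolding \<beta>_def by linarith
    qed
    define ind where "ind y = (\<lambda>i. if i = y then 1 else 0 :: real)" for y :: 'a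
    define z where "z = (\<Sum>y\<in>Y. L (ind y) *\<^sub>R y)"
    have Ez: "L (E \<psi>) = \<psi> z" if "linear \<psi>" for \<psi>
    proof -
      have "E \<psi> = (\<Sum>y\<in>Y. \<psi> y *\<^sub>R ind y)"
      proof
        fix i
        have "(\<Sum>y\<in>Y. \<psi> y *\<^sub>R ind y) i = (\<Sum>y\<in>Y. \<psi> y * ind y i)"
          using fY by (simp add: sum_fun_apply)
        also have "\<dots> = (if i \<in> Y then \<psi> i else 0)"
          using fY by (simp add: ind_def if_distrib[of "\<lambda>t. _ * t"] sum.delta cong: if_cong)
        finally show "E \<psi> i = (\<Sum>y\<in>Y. \<psi> y *\<^sub>R ind y) i" by (simp add: E_def)
      qed
      then have "L (E \<psi>) = (\<Sum>y\<in>Y. L (\<psi> y *\<^sub>R ind y))"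
        using linear_sum[OF L(1), of "\<lambda>y. \<psi> y *\<^sub>R ind y" Y] by simp
      also have "\<dots> = (\<Sum>y\<in>Y. \<psi> y * L (ind y))"
        using linear_scale[OF L(1)] by simp
      also have "\<dots> = (\<Sum>y\<in>Y. \<psi> (L (ind y) *\<^sub>R y))"
        using linear_scale[OF that] by (simp add: mult.commute)
      also have "\<dots> = \<psi> z"
        unfolding z_def using linear_sum[OF that, of "\<lambda>y. L (ind y) *\<^sub>R y" Y] by simp
      finally show ?thesis .
    qed
    have "\<beta> < \<phi> z" using LEphi Ez[OF linphi] by simp
    moreover have "\<forall>\<psi>\<in>S. \<psi> z \<le> \<beta>"
    proof
      fix \<psi> assume "\<psi> \<in> S"
      then have "linear \<psi>" using Ssub by (auto simp: tdual_def)
      then show "\<psi> z \<le> \<beta>" using LEk[OF \<open>\<psi> \<in> S\<close>] Ez by simp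
    qed
    ultimately show ?thesis by blast
  qed
qed



lemma D_closed:
  fixes f :: "'a::real_vector \<Rightarrow> ereal"
  assumes fx: "f x = ereal fxr"
  shows "closedin (weak_star tau) (eps_subdiff tau \<epsilon> f x)"
proof -
  define G where "G y = {\<psi> :: 'a \<Rightarrow> real. ereal fxr + ereal (\<psi> y - \<psi> x - \<epsilon>) \<le> f y}" for y
  have cG: "closedin (powertop_real UNIV) (G y)" for y
  proof (cases "f y")
    case (real r)
    have "G y = {\<psi> \<in> topspace (powertop_real UNIV). (\<lambda>\<psi>. \<psi> y - \<psi> x) \<psi> \<in> {..r - fxr + \<epsilon>}}"
      by (auto simp: G_def real)
    also have "closedin (powertop_real UNIV) \<dots>"
      by (rule closedin_continuous_map_preimage)
        (auto intro!: continuous_map_diff continuous_map_product_projection)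
    finally show ?thesis .
  next
    case PInf
    then have "G y = topspace (powertop_real UNIV)" by (auto simp: G_def)
    then show ?thesis using closedin_topspace by metis
  next
    case MInf
    then have "G y = {}" by (auto simp: G_def)
    then show ?thesis by simp
  qed
  have "closedin (powertop_real UNIV) (\<Inter> (range G))"
    by (rule closedin_Inter) (auto intro: cG)
  moreover have "eps_subdiff tau \<epsilon> f x = \<Inter> (range G) \<inter> tdual tau"
    by (auto simp: eps_subdiff_def G_def fx)
  ultimately show ?thesis unfolding weak_star_def closedin_subtopology by blast
qed

lemma D_fconvex:
  fixes f :: "'a::real_vector \<Rightarrow> ereal"
  assumes fx: "f x = ereal fxr"
  shows "fconvex (eps_subdiff tau \<epsilon> f x)"
  unfolding fconvex_def
proof (intro ballI allI impI)
  fix \<psi>1 \<psi>2 :: "'a \<Rightarrow> real" and u :: real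
  assume p1: "\<psi>1 \<in> eps_subdiff tau \<epsilon> f x" and p2: "\<psi>2 \<in> eps_subdiff tau \<epsilon> f x" and u: "0 \<le> u \<and> u \<le> 1"
  have t: "(\<lambda>y. u * \<psi>1 y + (1 - u) * \<psi>2 y) \<in> tdual tau"
    using p1 p2 by (intro tdual_comb) (auto simp: eps_subdiff_def)
  have "ereal fxr + ereal (u * \<psi>1 y + (1 - u) * \<psi>2 y - (u * \<psi>1 x + (1 - u) * \<psi>2 x) - \<epsilon>) \<le> f y" for y
  proof (cases "f y")
    case (real r)
    have "f x + ereal (\<psi>1 y - \<psi>1 x - \<epsilon>) \<le> f y" using p1 by (simp add: eps_subdiff_def)
    then have a: "\<psi>1 y - \<psi>1 x - \<epsilon> \<le> r - fxr" using real fx by simp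
    have "f x + ereal (\<psi>2 y - \<psi>2 x - \<epsilon>) \<le> f y" using p2 by (simp add: eps_subdiff_def)
    then have b: "\<psi>2 y - \<psi>2 x - \<epsilon> \<le> r - fxr" using real fx by simp
    have "u * (\<psi>1 y - \<psi>1 x - \<epsilon>) + (1 - u) * (\<psi>2 y - \<psi>2 x - \<epsilon>) \<le> r - fxr"
      by (rule convex_bound_le[OF a b]) (use u in auto)
    then show ?thesis using real by (simp add: algebra_simps)
  next
    case PInf then show ?thesis by simp
  next
    case MInf
    have "f x + ereal (\<psi>1 y - \<psi>1 x - \<epsilon>) \<le> f y" using p1 by (simp add: eps_subdiff_def)
    then show ?thesis using MInf fx by simp
  qed
  then show "(\<lambda>y. u * \<psi>1 y + (1 - u) * \<psi>2 y) \<in> eps_subdiff tau \<epsilon> f x"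
    using t fx by (simp add: eps_subdiff_def)
qed



theorem corollary8:
  fixes tau :: "'a::real_vector topology"
    and Ttop :: "'i topology"
    and F :: "'i \<Rightarrow> 'a \<Rightarrow> ereal"
    and x :: 'a
  assumes X: "sep_lcs tau"
    and T_ne: "topspace Ttop \<noteq> {}"
    and fam: "\<And>t. t \<in> topspace Ttop \<Longrightarrow> proper_fun (F t) \<and> convex_fun (F t) \<and> lsc_fun tau (F t)"
    and SH_cpt: "compact_space Ttop" and SH_haus: "Hausdorff_space Ttop"
    and SH_usc: "\<And>z. usc_on Ttop (\<lambda>t. F t z)"
    and dom: "(SUP t\<in>topspace Ttop. F t x) < \<infinity>"
    and active: "\<And>t. t \<in> topspace Ttop \<Longrightarrow> F t x = (SUP s\<in>topspace Ttop. F s x)"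
  shows "eps_subdiff tau 0 (\<lambda>z. SUP t\<in>topspace Ttop. F t z) x =
         (\<Inter>\<epsilon>\<in>{0<..}. wstar_cch tau (\<Union>t\<in>topspace Ttop. eps_subdiff tau \<epsilon> (F t) x))"
proof -
  define T where "T = topspace Ttop"
  define f where "f z = (SUP t\<in>T. F t z)" for z
  define A where "A \<epsilon> = (\<Union>t\<in>T. eps_subdiff tau \<epsilon> (F t) x)" for \<epsilon>
  have prp: "\<And>y. F t y \<noteq> -\<infinity>" and cvx: "convex_fun (F t)" and lsc: "lsc_fun tau (F t)" if "t \<in> T" for t
    using fam[of t] that by (auto simp: T_def proper_fun_def)
  obtain t0 where t0: "t0 \<in> T" using T_ne unfolding T_def by blast
  have Ftx: "F t x = f x" if "t \<in> T" for t using active[of t] that by (simp add: T_def f_def)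
  obtain fxr where fx: "f x = ereal fxr"
  proof -
    have "f x \<noteq> \<infinity>" using dom by (simp add: f_def T_def)
    moreover have "f x \<noteq> -\<infinity>" using Ftx[OF t0] prp[OF t0] by metis
    ultimately show ?thesis using that by (cases "f x") auto
  qed
  have Ftxr: "F t x = ereal fxr" if "t \<in> T" for t using Ftx[OF that] fx by simp
  have fge: "F t y \<le> f y" if "t \<in> T" for t y unfolding f_def using that by (rule SUP_upper)
  have hullD: "wstar_cch tau (A \<epsilon>) \<subseteq> eps_subdiff tau \<epsilon> f x" for \<epsilon>
    unfolding wstar_cch_def
  proof (rule hull_minimal)
    show "A \<epsilon> \<subseteq> eps_subdiff tau \<epsilon> f x"
    proof
      fix \<psi> assume "\<psi> \<in> A \<epsilon>"
      then obtain t where t: "t \<in> T" and p: "\<psi> \<in> eps_subdiff tau \<epsilon> (F t) x" by (auto simp: A_def)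
      have "f x + ereal (\<psi> y - \<psi> x - \<epsilon>) \<le> f y" for y
      proof -
        have "F t x + ereal (\<psi> y - \<psi> x - \<epsilon>) \<le> F t y" using p by (simp add: eps_subdiff_def)
        then show ?thesis using Ftx[OF t] fge[OF t, of y] by simp
      qed
      then show "\<psi> \<in> eps_subdiff tau \<epsilon> f x" using p fx by (simp add: eps_subdiff_def)
    qed
    show "fconvex (eps_subdiff tau \<epsilon> f x) \<and> closedin (weak_star tau) (eps_subdiff tau \<epsilon> f x)"
      using D_fconvex[of f x fxr tau \<epsilon>, OF fx] D_closed[of f x fxr tau \<epsilon>, OF fx] by blast
  qed
  have sub1: "(\<Inter>\<epsilon>\<in>{0<..}. wstar_cch tau (A \<epsilon>)) \<subseteq> eps_subdiff tau 0 f x"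
  proof
    fix \<phi> assume "\<phi> \<in> (\<Inter>\<epsilon>\<in>{0<..}. wstar_cch tau (A \<epsilon>))"
    then have pe: "\<phi> \<in> eps_subdiff tau \<epsilon> f x" if "\<epsilon> > 0" for \<epsilon> using hullD that by blast
    have pt: "\<phi> \<in> tdual tau" using pe[of 1] by (simp add: eps_subdiff_def)
    have "f x + ereal (\<phi> y - \<phi> x - 0) \<le> f y" for y
    proof (cases "f y")
      case (real r)
      have "\<phi> y - \<phi> x - \<epsilon> \<le> r - fxr" if "\<epsilon> > 0" for \<epsilon>
      proof -
        have "f x + ereal (\<phi> y - \<phi> x - \<epsilon>) \<le> f y" using pe[OF that] by (simp add: eps_subdiff_def)
        then show ?thesis using real fx by simp
      qed
      then have "\<phi> y - \<phi> x \<le> r - fxr"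
        by (metis diff_le_eq field_le_epsilon add.commute)
      then show ?thesis using real fx by simp
    next
      case PInf then show ?thesis by simp
    next
      case MInf
      have "f x + ereal (\<phi> y - \<phi> x - 1) \<le> f y" using pe[of 1] by (simp add: eps_subdiff_def)
      then show ?thesis using MInf fx by simp
    qed
    then show "\<phi> \<in> eps_subdiff tau 0 f x" using pt fx by (simp add: eps_subdiff_def)
  qed
  have sub2: "\<phi> \<in> wstar_cch tau (A \<epsilon>)" if phi: "\<phi> \<in> eps_subdiff tau 0 f x" and ep: "\<epsilon> > 0" for \<phi> \<epsilon>
  proof (rule ccontr)
    assume nin: "\<phi> \<notin> wstar_cch tau (A \<epsilon>)"
    then obtain S where S: "fconvex S" "closedin (weak_star tau) S" "A \<epsilon> \<subseteq> S" "\<phi> \<notin> S"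
      unfolding wstar_cch_def hull_def by blast
    have pt: "\<phi> \<in> tdual tau" using phi by (simp add: eps_subdiff_def)
    have lphi: "linear \<phi>" using pt by (simp add: tdual_def)
    have phiineq: "f x + ereal (\<phi> y - \<phi> x - 0) \<le> f y" for y using phi by (simp add: eps_subdiff_def)
    obtain z \<beta> where zb: "\<beta> < \<phi> z" "\<And>\<psi>. \<psi> \<in> S \<Longrightarrow> \<psi> z \<le> \<beta>"
      using wstar_sep[OF S(1,2) pt S(4)] by blast
    define Os where "Os s = {t \<in> T. F t (x + s *\<^sub>R z) < ereal (fxr + s * \<phi> z - \<epsilon>)}" for s
    have cover: "\<exists>s>0. t \<in> Os s" if t: "t \<in> T" for t
    proof (rule ccontr)
      assume "\<not> (\<exists>s>0. t \<in> Os s)"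
      then have ray: "ereal (fxr + s * \<phi> z - \<epsilon>) \<le> F t (x + s *\<^sub>R z)" if "s > 0" for s
      proof -
        have "\<not> t \<in> Os s" using \<open>\<not> (\<exists>s>0. t \<in> Os s)\<close> that by blast
        then show ?thesis using t by (simp add: Os_def not_less)
      qed
      obtain \<psi> where "\<psi> \<in> eps_subdiff tau \<epsilon> (F t) x" "\<beta> < \<psi> z"
        using eps_dir[OF X prp[OF t] cvx[OF t] lsc[OF t] Ftxr[OF t] ep ray zb(1)] by blast
      moreover have "\<psi> \<in> S" using calculation(1) t S(3) by (auto simp: A_def)
      ultimately show False using zb(2) by fastforce
    qed
    have oO: "openin Ttop (Os s)" for s
    proof -
      have "openin Ttop {t \<in> topspace Ttop. F t (x + s *\<^sub>R z) < ereal (fxr + s * \<phi> z - \<epsilon>)}"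
        using SH_usc[of "x + s *\<^sub>R z"] by (simp add: usc_on_def)
      then show ?thesis by (simp add: Os_def T_def)
    qed
    have "compactin Ttop T" using SH_cpt by (simp add: compact_space_def T_def)
    then have cp: "\<And>\<U>. (\<forall>U \<in> \<U>. openin Ttop U) \<and> T \<subseteq> \<Union>\<U> \<Longrightarrow> (\<exists>\<F>. finite \<F> \<and> \<F> \<subseteq> \<U> \<and> T \<subseteq> \<Union>\<F>)"
      unfolding compactin_def by blast
    have "\<forall>U \<in> Os ` {0<..}. openin Ttop U" using oO by blast
    moreover have "T \<subseteq> \<Union>(Os ` {0<..})"
    proof
      fix t assume "t \<in> T"
      then obtain s where "s > 0" "t \<in> Os s" using cover by blast
      then show "t \<in> \<Union>(Os ` {0<..})" by blast
    qed
    ultimately have "\<exists>\<V>. finite \<V> \<and> \<V> \<subseteq> Os ` {0<..} \<and> T \<subseteq> \<Union>\<V>"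
      by (intro cp conjI)
    then obtain \<V> where V: "finite \<V>" "\<V> \<subseteq> Os ` {0<..}" "T \<subseteq> \<Union>\<V>" by blast
    obtain \<Sigma> where Sg: "\<Sigma> \<subseteq> {0<..}" "finite \<Sigma>" "\<V> = Os ` \<Sigma>"
      using finite_subset_image[OF V(1) V(2)] by blast
    have Sne: "\<Sigma> \<noteq> {}" using V(3) Sg(3) t0 by auto
    define sm where "sm = Min \<Sigma>"
    define sM where "sM = Max \<Sigma>"
    have smS: "sm \<in> \<Sigma>" unfolding sm_def using Sg(2) Sne by (rule Min_in)
    have smp: "sm > 0" using smS Sg(1) by auto
    have smle: "sm \<le> s" if "s \<in> \<Sigma>" for s unfolding sm_def using Sg(2) that by simp
    have sMge: "s \<le> sM" if "s \<in> \<Sigma>" for s unfolding sM_def using Sg(2) that by simp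
    have sMp: "sM > 0" using sMge[OF smS] smp by simp
    have bnd: "F t (x + sm *\<^sub>R z) \<le> ereal (fxr + sm * \<phi> z - \<epsilon> * sm / sM)" if t: "t \<in> T" for t
    proof -
      obtain s where s: "s \<in> \<Sigma>" "t \<in> Os s" using V(3) Sg(3) t by auto
      have sp: "s > 0" using s(1) Sg(1) by auto
      have lt: "F t (x + s *\<^sub>R z) < ereal (fxr + s * \<phi> z - \<epsilon>)" using s(2) by (simp add: Os_def)
      then obtain R where R: "F t (x + s *\<^sub>R z) = ereal R" using prp[OF t] by (cases "F t (x + s *\<^sub>R z)") auto
      have Rl: "R < fxr + s * \<phi> z - \<epsilon>" using lt R by simp
      have "F t (x + sm *\<^sub>R z) \<le> ereal ((sm/s) * R + (1 - sm/s) * fxr)"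
        by (rule slope_conv[OF cvx[OF t] Ftxr[OF t] smp smle[OF s(1)] R])
      also have "(sm/s) * R + (1 - sm/s) * fxr \<le> fxr + sm * \<phi> z - \<epsilon> * sm / sM"
      proof -
        have q: "sm / s > 0" using smp sp by simp
        have "(sm/s) * R \<le> (sm/s) * (fxr + s * \<phi> z - \<epsilon>)" using Rl q by (intro mult_left_mono) auto
        also have "\<dots> = (sm/s) * fxr + sm * \<phi> z - \<epsilon> * sm / s" using sp by (simp add: field_simps)
        finally have 1: "(sm/s) * R + (1 - sm/s) * fxr \<le> fxr + sm * \<phi> z - \<epsilon> * sm / s"
          by (simp add: algebra_simps)
        have "\<epsilon> * sm / sM \<le> \<epsilon> * sm / s" using sMge[OF s(1)] sp ep smp
          by (intro divide_left_mono) auto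
        then show ?thesis using 1 by linarith
      qed
      finally show ?thesis by simp
    qed
    have "f (x + sm *\<^sub>R z) \<le> ereal (fxr + sm * \<phi> z - \<epsilon> * sm / sM)"
      unfolding f_def by (rule SUP_least) (rule bnd)
    moreover have "ereal (fxr + sm * \<phi> z) \<le> f (x + sm *\<^sub>R z)"
    proof -
      have "f x + ereal (\<phi> (x + sm *\<^sub>R z) - \<phi> x - 0) \<le> f (x + sm *\<^sub>R z)" by (rule phiineq)
      moreover have "\<phi> (x + sm *\<^sub>R z) - \<phi> x = sm * \<phi> z"
        using linear_add[OF lphi] linear_scale[OF lphi] by simp
      ultimately show ?thesis using fx by simp
    qed
    ultimately have "fxr + sm * \<phi> z \<le> fxr + sm * \<phi> z - \<epsilon> * sm / sM" by (meson ereal_less_eq(3) order_trans)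
    moreover have "\<epsilon> * sm / sM > 0" using ep smp sMp by simp
    ultimately show False by simp
  qed
  have "eps_subdiff tau 0 f x = (\<Inter>\<epsilon>\<in>{0<..}. wstar_cch tau (A \<epsilon>))"
    using sub1 sub2 by blast
  moreover have "f = (\<lambda>z. SUP t\<in>topspace Ttop. F t z)" by (simp add: fun_eq_iff f_def T_def)
  ultimately show ?thesis by (simp add: A_def T_def)
qed

end
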